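(* Let $\mu$ be a Borel measure on $\mathbb{R}^d$ such that $\mu(Q)<\infty$ for every dyadic cube $Q\in\mathscr{D}$ and such that each of the $2^d$ $d$-dimensional quadrants has infinite $\mu$-measure. Let $f\in L^1(\mu)$ and $\lambda>0$, and let $\{Q_j\}_j$ be the (disjoint) maximal dyadic cubes covering $\Omega_\lambda=\{x: M_{\mathscr{D}}f(x)>\lambda\}$, i.e. $\Omega_\lambda=\bigcup_j Q_j$ and $\langle |f|\rangle_Q\le\lambda<\langle |f|\rangle_{Q_j}$ for every dyadic $Q\supsetneq Q_j$. Write $f=g+b+\beta$ where $$g=f\,1_{\mathbb{R}^d\setminus\Omega_\lambda}+\sum_j\langle f\rangle_{\widehat{Q}_j}1_{Q_j}+\sum_j\big(\langle f\rangle_{Q_j}-\langle f\rangle_{\widehat{Q}_j}\big)\frac{\mu(Q_j)}{\mu(\widehat{Q}_j)}1_{\widehat{Q}_j},$$ $$b=\sum_j b_j,\quad b_j=\big(f-\langle f\rangle_{Q_j}\big)1_{Q_j},\qquad \beta=\sum_j\beta_j,\quad \beta_j=\big(\langle f\rangle_{Q_j}-\langle f\rangle_{\widehat{Q}_j}\big)\Big(1_{Q_j}-\frac{\mu(Q_j)}{\mu(\widehat{Q}_j)}1_{\widehat{Q}_j}\Big).$$ Then: (a) for every $1\le p<\infty$, $\|g\|_{L^p(\mu)}^p\le C_p\,\lambda^{p-1}\|f\|_{L^1(\mu)}$, with $C_p$ depending only on $p$; (b) $\operatorname{supp}(b_j)\subset Q_j$, $\int_{\mathbb{R}^d}b_j\,d\mu=0$,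 and $\sum_j\|b_j\|_{L^1(\mu)}\le 2\|f\|_{L^1(\mu)}$; (c) $\operatorname{supp}(\beta_j)\subset\widehat{Q}_j$, $\int_{\mathbb{R}^d}\beta_j\,d\mu=0$, and $\sum_j\|\beta_j\|_{L^1(\mu)}\le 4\|f\|_{L^1(\mu)}$.
   Context: $\mathscr{D}$ is the standard dyadic grid in $\mathbb{R}^d$ (cubes $2^{-k}([0,1)^d+m)$, $k\in\mathbb{Z}$, $m\in\mathbb{Z}^d$). For $Q\in\mathscr{D}$, $\widehat{Q}$ denotes its dyadic parent. The $d$-dimensional quadrants are the sets $\mathbb{R}^{\pm}\times\dots\times\mathbb{R}^{\pm}$ with $\mathbb{R}^+=[0,\infty)$, $\mathbb{R}^-=(-\infty,0)$. For $Q\in\mathscr{D}$, $\langle f\rangle_Q=\mu(Q)^{-1}\int_Q f\,d\mu$, with $\langle f\rangle_Q=0$ if $\mu(Q)=0$. The dyadic maximal function is $M_{\mathscr{D}}f(x)=\sup_{x\in Q\in\mathscr{D}}\langle |f|\rangle_Q$. *)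

theory Defs
  imports "HOL-Analysis.Analysis"
begin

(* Points of R^d are encoded as extensional functions on the index set {..<d},
  i.e. elements of {..<d} <rightarrow><^sub>E UNIV (the carrier of the product measure space).
  The dimension d is an explicit natural number so that constants can be
  quantified uniformly in d. *)

definition dcube :: "nat \<Rightarrow> int \<Rightarrow> (nat \<Rightarrow> int) \<Rightarrow> (nat \<Rightarrow> real) set" where
  "dcube d k m = {x \<in> {..<d} \<rightarrow>\<^sub>E (UNIV :: real set).
     \<forall>i<d. 2 powr (- real_of_int k) * real_of_int (m i) \<le> x i
          \<and> x i < 2 powr (- real_of_int k) * (real_of_int (m i) + 1)}"

definition dyadic :: "nat \<Rightarrow> (nat \<Rightarrow> real) set set" where
  "dyadic d = {Q. \<exists>k m. Q = dcube d k m}"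

definition dparent :: "nat \<Rightarrow> (nat \<Rightarrow> real) set \<Rightarrow> (nat \<Rightarrow> real) set" where
  "dparent d Q = (THE R. \<exists>k m. Q = dcube d k m \<and> R = dcube d (k - 1) (\<lambda>i. m i div 2))"

definition quadrant :: "nat \<Rightarrow> (nat \<Rightarrow> bool) \<Rightarrow> (nat \<Rightarrow> real) set" where
  "quadrant d s = {x \<in> {..<d} \<rightarrow>\<^sub>E (UNIV :: real set).
     \<forall>i<d. (if s i then 0 \<le> x i else x i < 0)}"

definition avg :: "'a measure \<Rightarrow> ('a \<Rightarrow> real) \<Rightarrow> 'a set \<Rightarrow> real" where
  "avg M f Q = (if measure M Q = 0 then 0 else (LINT x:Q|M. f x) / measure M Q)"

definition dyadic_max :: "nat \<Rightarrow> (nat \<Rightarrow> real) measure \<Rightarrow> ((nat \<Rightarrow> real) \<Rightarrow> real)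
    \<Rightarrow> (nat \<Rightarrow> real) \<Rightarrow> ereal" where
  "dyadic_max d M f x = (SUP Q \<in> {Q \<in> dyadic d. x \<in> Q}. ereal (avg M (\<lambda>y. \<bar>f y\<bar>) Q))"

definition Omega :: "nat \<Rightarrow> (nat \<Rightarrow> real) measure \<Rightarrow> ((nat \<Rightarrow> real) \<Rightarrow> real)
    \<Rightarrow> real \<Rightarrow> (nat \<Rightarrow> real) set" where
  "Omega d M f lam = {x \<in> space M. dyadic_max d M f x > ereal lam}"

definition maxcubes :: "nat \<Rightarrow> (nat \<Rightarrow> real) measure \<Rightarrow> ((nat \<Rightarrow> real) \<Rightarrow> real)
    \<Rightarrow> real \<Rightarrow> (nat \<Rightarrow> real) set set" where
  "maxcubes d M f lam = {Q \<in> dyadic d. lam < avg M (\<lambda>y. \<bar>f y\<bar>) Q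
      \<and> (\<forall>R \<in> dyadic d. Q \<subset> R \<longrightarrow> avg M (\<lambda>y. \<bar>f y\<bar>) R \<le> lam)}"

definition CZ_g :: "nat \<Rightarrow> (nat \<Rightarrow> real) measure \<Rightarrow> ((nat \<Rightarrow> real) \<Rightarrow> real)
    \<Rightarrow> real \<Rightarrow> (nat \<Rightarrow> real) \<Rightarrow> real" where
  "CZ_g d M f lam x =
     f x * indicator (space M - Omega d M f lam) x
     + (\<Sum>\<^sub>\<infinity>Q \<in> maxcubes d M f lam. avg M f (dparent d Q) * indicator Q x)
     + (\<Sum>\<^sub>\<infinity>Q \<in> maxcubes d M f lam.
          (avg M f Q - avg M f (dparent d Q)) * (measure M Q / measure M (dparent d Q))
          * indicator (dparent d Q) x)"

definition CZ_b :: "(nat \<Rightarrow> real) measure \<Rightarrow> ((nat \<Rightarrow> real) \<Rightarrow> real)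
    \<Rightarrow> (nat \<Rightarrow> real) set \<Rightarrow> (nat \<Rightarrow> real) \<Rightarrow> real" where
  "CZ_b M f Q x = (f x - avg M f Q) * indicator Q x"

definition CZ_beta :: "nat \<Rightarrow> (nat \<Rightarrow> real) measure \<Rightarrow> ((nat \<Rightarrow> real) \<Rightarrow> real)
    \<Rightarrow> (nat \<Rightarrow> real) set \<Rightarrow> (nat \<Rightarrow> real) \<Rightarrow> real" where
  "CZ_beta d M f Q x = (avg M f Q - avg M f (dparent d Q))
      * (indicator Q x - (measure M Q / measure M (dparent d Q)) * indicator (dparent d Q) x)"

definition dyadic_setting :: "nat \<Rightarrow> (nat \<Rightarrow> real) measure \<Rightarrow> bool" where
  "dyadic_setting d M \<longleftrightarrow>
     sets M = sets (\<Pi>\<^sub>M i\<in>{..<d}. (borel :: real measure))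
     \<and> (\<forall>Q \<in> dyadic d. emeasure M Q < \<infinity>)
     \<and> (\<forall>s. emeasure M (quadrant d s) = \<infinity>)"

end

theory Submission
  imports Defs
begin


definition cub :: "nat \<Rightarrow> int \<Rightarrow> (nat \<Rightarrow> real) \<Rightarrow> (nat \<Rightarrow> real) set" where
  "cub d k x = dcube d k (\<lambda>i. \<lfloor>2 powr real_of_int k * x i\<rfloor>)"

abbreviation SP :: "nat \<Rightarrow> (nat \<Rightarrow> real) set" where
  "SP d \<equiv> {..<d} \<rightarrow>\<^sub>E (UNIV :: real set)"

lemma interval_floor_iff:
  fixes k :: int and m :: int and y :: real
  shows "(2 powr (- real_of_int k) * real_of_int m \<le> y \<and> y < 2 powr (- real_of_int k) * (real_of_int m + 1))
     \<longleftrightarrow> m = \<lfloor>2 powr real_of_int k * y\<rfloor>"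
proof -
  have p: "2 powr (- real_of_int k) > 0" by simp
  have inv: "2 powr real_of_int k * 2 powr (- real_of_int k) = 1"
    by (simp add: powr_add[symmetric])
  have "2 powr (- real_of_int k) * real_of_int m \<le> y \<longleftrightarrow> real_of_int m \<le> 2 powr real_of_int k * y"
  proof -
    have "2 powr (- real_of_int k) * real_of_int m \<le> y \<longleftrightarrow>
      2 powr real_of_int k * (2 powr (- real_of_int k) * real_of_int m) \<le> 2 powr real_of_int k * y"
      by (simp add: mult_le_cancel_left_pos)
    also have "\<dots> \<longleftrightarrow> real_of_int m \<le> 2 powr real_of_int k * y"
      by (simp add: mult.assoc[symmetric] inv)
    finally show ?thesis .
  qed
  moreover have "y < 2 powr (- real_of_int k) * (real_of_int m + 1) \<longleftrightarrow> 2 powr real_of_int k * y < real_of_int m + 1"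
  proof -
    have "y < 2 powr (- real_of_int k) * (real_of_int m + 1) \<longleftrightarrow>
      2 powr real_of_int k * y < 2 powr real_of_int k * (2 powr (- real_of_int k) * (real_of_int m + 1))"
      by (simp add: mult_less_cancel_left_pos)
    also have "\<dots> \<longleftrightarrow> 2 powr real_of_int k * y < real_of_int m + 1"
      by (simp add: mult.assoc[symmetric] inv)
    finally show ?thesis .
  qed
  moreover have "m = \<lfloor>2 powr real_of_int k * y\<rfloor> \<longleftrightarrow> \<lfloor>2 powr real_of_int k * y\<rfloor> = m" by auto
  ultimately show ?thesis by (simp add: floor_eq_iff)
qed

lemma mem_dcube: "x \<in> dcube d k m \<longleftrightarrow> x \<in> SP d \<and> (\<forall>i<d. m i = \<lfloor>2 powr real_of_int k * x i\<rfloor>)"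
  unfolding dcube_def using interval_floor_iff by blast

lemma mem_cub: "y \<in> cub d k x \<longleftrightarrow> y \<in> SP d \<and> (\<forall>i<d. \<lfloor>2 powr real_of_int k * y i\<rfloor> = \<lfloor>2 powr real_of_int k * x i\<rfloor>)"
  unfolding cub_def mem_dcube by auto

lemma cub_self: "x \<in> SP d \<Longrightarrow> x \<in> cub d k x"
  by (simp add: mem_cub)

lemma dcube_eq_cub: "x \<in> dcube d k m \<Longrightarrow> dcube d k m = cub d k x"
  unfolding mem_dcube by (auto simp: mem_cub mem_dcube)

lemma cub_eq: "y \<in> cub d k x \<Longrightarrow> cub d k y = cub d k x"
  unfolding mem_cub by (auto simp: mem_cub)

lemma floor_gen:
  fixes y :: real and k j :: int
  assumes "k \<le> j"
  shows "\<lfloor>2 powr real_of_int k * y\<rfloor> = \<lfloor>2 powr real_of_int j * y\<rfloor> div 2 ^ nat (j - k)"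
proof -
  have "2 powr real_of_int k * y = (2 powr real_of_int j * y) / real_of_int ((2::int) ^ nat (j - k))"
  proof -
    have "real_of_int ((2::int) ^ nat (j - k)) = 2 powr real_of_int (j - k)"
      using assms by (simp add: powr_realpow[symmetric])
    moreover have "2 powr real_of_int j = 2 powr real_of_int k * 2 powr real_of_int (j - k)"
      by (simp add: powr_add[symmetric])
    ultimately show ?thesis by simp
  qed
  then show ?thesis using floor_divide_real_eq_div[of "(2::int) ^ nat (j - k)" "2 powr real_of_int j * y"]
    by simp
qed

lemma cub_mono: "k \<le> j \<Longrightarrow> cub d j x \<subseteq> cub d k x"
  unfolding mem_cub subset_iff using floor_gen by metis

lemma dcube_ne: "dcube d k m \<noteq> {}"
proof -
  let ?x = "\<lambda>i\<in>{..<d}. 2 powr (- real_of_int k) * real_of_int (m i)"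
  have "?x \<in> dcube d k m" unfolding dcube_def by auto
  then show ?thesis by blast
qed

lemma cub_ne: "cub d k x \<noteq> {}"
  unfolding cub_def by (rule dcube_ne)



lemma gen_unique_aux:
  assumes d: "0 < d" and x: "x \<in> SP d" and kj: "k < j"
  shows "cub d k x \<noteq> cub d j x"
proof
  assume eq: "cub d k x = cub d j x"
  define n where "n = \<lfloor>2 powr real_of_int k * x 0\<rfloor>"
  define c where "c = 2 powr (- real_of_int k) * real_of_int n"
  define z1 where "z1 = x(0 := c)"
  define z2 where "z2 = x(0 := c + 2 powr (- real_of_int k) / 2)"
  have inv: "2 powr real_of_int k * 2 powr (- real_of_int k) = 1"
    by (simp add: powr_add[symmetric])
  have c1: "2 powr real_of_int k * c = real_of_int n"
    unfolding c_def by (simp add: mult.assoc[symmetric] inv)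
  have c2: "2 powr real_of_int k * (c + 2 powr (- real_of_int k) / 2) = real_of_int n + 1/2"
    unfolding c_def by (simp add: distrib_left mult.assoc[symmetric] inv)
  have z1: "z1 \<in> cub d k x" using x d unfolding mem_cub z1_def
    by (auto simp: c1 n_def PiE_def extensional_def)
  have "\<lfloor>real_of_int n + 1/2\<rfloor> = n" by (simp add: floor_eq_iff)
  then have z2: "z2 \<in> cub d k x" using x d unfolding mem_cub z2_def
    by (auto simp: c2 n_def PiE_def extensional_def)
  have "z1 \<in> cub d j x" "z2 \<in> cub d j x" using z1 z2 eq by auto
  then have z12: "\<lfloor>2 powr real_of_int j * z1 0\<rfloor> = \<lfloor>2 powr real_of_int j * z2 0\<rfloor>"
    using d unfolding mem_cub by auto
  define e where "e = 2 powr real_of_int (j - k)"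
  have e2: "e \<ge> 2"
  proof -
    have "real_of_int (j - k) \<ge> 1" using kj by simp
    then have "2 powr real_of_int (j - k) \<ge> 2 powr 1" by (rule powr_mono) auto
    then show ?thesis by (simp add: e_def)
  qed
  have jk: "2 powr real_of_int j = e * 2 powr real_of_int k"
    unfolding e_def by (simp add: powr_add[symmetric])
  have a1: "2 powr real_of_int j * z1 0 = e * real_of_int n"
    unfolding z1_def using c1 by (simp add: jk mult.assoc)
  have "2 powr real_of_int j * z2 0 = e * (2 powr real_of_int k * c) + e * (2 powr real_of_int k * 2 powr (- real_of_int k)) / 2"
    unfolding z2_def jk by (simp add: algebra_simps)
  also have "\<dots> = e * real_of_int n + e / 2" by (simp only: c1 inv)
  finally have a2: "2 powr real_of_int j * z2 0 = e * real_of_int n + e / 2" .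
  have "\<lfloor>e * real_of_int n + e / 2\<rfloor> \<ge> \<lfloor>e * real_of_int n + 1\<rfloor>"
    using e2 by (intro floor_mono) simp
  then have "\<lfloor>e * real_of_int n + e / 2\<rfloor> > \<lfloor>e * real_of_int n\<rfloor>" by simp
  then show False using z12 a1 a2 by simp
qed

lemma gen_unique:
  assumes d: "0 < d" and x: "x \<in> SP d" and y: "y \<in> SP d" and eq: "cub d k x = cub d j y"
  shows "k = j"
proof (rule ccontr)
  assume "k \<noteq> j"
  have xj: "x \<in> cub d j y" using eq cub_self[OF x] by auto
  then have eq': "cub d k x = cub d j x" using eq cub_eq[OF xj] by simp
  show False
  proof (cases "k < j")
    case True then show ?thesis using gen_unique_aux[OF d x] eq' by blast
  next
    case False then have "j < k" using \<open>k \<noteq> j\<close> by simp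
    then show ?thesis using gen_unique_aux[OF d x] eq' by metis
  qed
qed

lemma dyadic_iff: "Q \<in> dyadic d \<longleftrightarrow> (\<exists>k x. x \<in> SP d \<and> Q = cub d k x)"
proof
  assume "Q \<in> dyadic d"
  then obtain k m where Q: "Q = dcube d k m" unfolding dyadic_def by auto
  obtain x where x: "x \<in> dcube d k m" using dcube_ne by blast
  have "x \<in> SP d" using x mem_dcube by simp
  moreover have "Q = cub d k x" using Q dcube_eq_cub[OF x] by simp
  ultimately show "\<exists>k x. x \<in> SP d \<and> Q = cub d k x" by blast
next
  assume "\<exists>k x. x \<in> SP d \<and> Q = cub d k x"
  then show "Q \<in> dyadic d" unfolding dyadic_def cub_def by blast
qed

lemma cub_dyadic: "x \<in> SP d \<Longrightarrow> cub d k x \<in> dyadic d"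
  using dyadic_iff by blast

lemma dyadic_sub_SP: "Q \<in> dyadic d \<Longrightarrow> Q \<subseteq> SP d"
  unfolding dyadic_def dcube_def by auto

lemma dyadic_at: "Q \<in> dyadic d \<Longrightarrow> z \<in> Q \<Longrightarrow> \<exists>k. Q = cub d k z"
proof -
  assume Q: "Q \<in> dyadic d" and z: "z \<in> Q"
  obtain k x where "x \<in> SP d" and Qe: "Q = cub d k x" using Q unfolding dyadic_iff by blast
  then have "cub d k z = cub d k x" using z cub_eq by simp
  then show ?thesis using Qe by blast
qed

lemma nested_or_disjoint:
  assumes "Q \<in> dyadic d" "R \<in> dyadic d" "z \<in> Q" "z \<in> R"
  shows "Q \<subseteq> R \<or> R \<subseteq> Q"
proof -
  obtain k where k: "Q = cub d k z" using assms dyadic_at by blast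
  obtain j where j: "R = cub d j z" using assms dyadic_at by blast
  show ?thesis
  proof (cases "k \<le> j")
    case True then show ?thesis using k j cub_mono[of k j d z] by simp
  next
    case False then show ?thesis using k j cub_mono[of j k d z] by simp
  qed
qed

lemma dparent_cub:
  assumes d: "0 < d" and x: "x \<in> SP d"
  shows "dparent d (cub d k x) = cub d (k - 1) x"
  unfolding dparent_def
proof (rule the_equality)
  show "\<exists>ka m. cub d k x = dcube d ka m \<and> cub d (k - 1) x = dcube d (ka - 1) (\<lambda>i. m i div 2)"
  proof (intro exI conjI)
    show "cub d k x = dcube d k (\<lambda>i. \<lfloor>2 powr real_of_int k * x i\<rfloor>)" by (simp add: cub_def)
    have "\<lfloor>2 powr real_of_int (k - 1) * x i\<rfloor> = \<lfloor>2 powr real_of_int k * x i\<rfloor> div 2" for i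
      using floor_gen[of "k - 1" k "x i"] by simp
    then show "cub d (k - 1) x = dcube d (k - 1) (\<lambda>i. \<lfloor>2 powr real_of_int k * x i\<rfloor> div 2)"
      by (simp add: cub_def)
  qed
next
  fix R assume "\<exists>ka m. cub d k x = dcube d ka m \<and> R = dcube d (ka - 1) (\<lambda>i. m i div 2)"
  then obtain ka m where e1: "cub d k x = dcube d ka m" and R: "R = dcube d (ka - 1) (\<lambda>i. m i div 2)"
    by blast
  have xm: "x \<in> dcube d ka m" using e1 cub_self[OF x, of k] by simp
  have "cub d k x = cub d ka x" using e1 dcube_eq_cub[OF xm] by simp
  then have kk: "ka = k" using gen_unique[OF d x x] by simp
  have "\<forall>i<d. m i = \<lfloor>2 powr real_of_int k * x i\<rfloor>" using xm kk mem_dcube by simp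
  then have "\<forall>i<d. m i div 2 = \<lfloor>2 powr real_of_int (k - 1) * x i\<rfloor>"
    using floor_gen[of "k - 1" k] by simp
  then have "x \<in> R" using x R kk mem_dcube by auto
  then show "R = cub d (k - 1) x" using R dcube_eq_cub kk by simp
qed

lemma cub_strict:
  assumes d: "0 < d" and x: "x \<in> SP d"
  shows "cub d k x \<subset> cub d (k - 1) x"
  using cub_mono[of "k - 1" k d x] gen_unique[OF d x x, of k "k - 1"] by auto

lemma dparent_props:
  assumes d: "0 < d" and Q: "Q \<in> dyadic d"
  shows "dparent d Q \<in> dyadic d" "Q \<subset> dparent d Q"
proof -
  obtain k x where x: "x \<in> SP d" and Qe: "Q = cub d k x" using Q dyadic_iff by blast
  show "dparent d Q \<in> dyadic d" using dparent_cub[OF d x] Qe cub_dyadic[OF x] by simp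
  show "Q \<subset> dparent d Q" using dparent_cub[OF d x] Qe cub_strict[OF d x] by simp
qed

lemma dparent_sub:
  assumes d: "0 < d" and Q: "Q \<in> dyadic d" and R: "R \<in> dyadic d" and QR: "Q \<subset> R"
  shows "dparent d Q \<subseteq> R"
proof -
  obtain k0 m0 where "Q = dcube d k0 m0" using Q unfolding dyadic_def by blast
  then obtain z where z: "z \<in> Q" using dcube_ne[of d k0 m0] by blast
  have zS: "z \<in> SP d" using z Q dyadic_sub_SP by blast
  obtain k where Qe: "Q = cub d k z" using dyadic_at[OF Q z] by blast
  have zR: "z \<in> R" using z QR by blast
  obtain j where Re: "R = cub d j z" using dyadic_at[OF R zR] by blast
  have "j < k"
  proof (rule ccontr)
    assume "\<not> j < k"
    then have "R \<subseteq> Q" using Qe Re cub_mono[of k j d z] by simp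
    then show False using QR by blast
  qed
  then have "cub d (k - 1) z \<subseteq> cub d j z" using cub_mono[of j "k - 1" d z] by simp
  then show ?thesis using Qe Re dparent_cub[OF d zS, of k] by simp
qed

lemma dcube_restrict: "dcube d k m = dcube d k (restrict m {..<d})"
  unfolding dcube_def by auto

lemma countable_dyadic: "countable (dyadic d)"
proof -
  have "dyadic d \<subseteq> (\<lambda>(k, m). dcube d k m) ` (UNIV \<times> ({..<d} \<rightarrow>\<^sub>E (UNIV :: int set)))"
  proof
    fix Q assume "Q \<in> dyadic d"
    then obtain k m where "Q = dcube d k m" unfolding dyadic_def by auto
    then have "Q = dcube d k (restrict m {..<d})" using dcube_restrict by simp
    then show "Q \<in> (\<lambda>(k, m). dcube d k m) ` (UNIV \<times> ({..<d} \<rightarrow>\<^sub>E (UNIV :: int set)))"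
      by (intro image_eqI[of _ _ "(k, restrict m {..<d})"]) auto
  qed
  moreover have "countable ((UNIV :: int set) \<times> ({..<d} \<rightarrow>\<^sub>E (UNIV :: int set)))"
    by (intro countable_SIGMA countable_PiE) (auto intro: countableI_type)
  ultimately show ?thesis by (metis countable_image countable_subset)
qed

lemma dcube_PiE: "dcube d k m = PiE {..<d} (\<lambda>i. {2 powr (- real_of_int k) * real_of_int (m i) ..<
     2 powr (- real_of_int k) * (real_of_int (m i) + 1)})"
  unfolding dcube_def by (auto simp: PiE_def Pi_def)

lemma dyadic_sets:
  assumes "sets M = sets (\<Pi>\<^sub>M i\<in>{..<d}. (borel :: real measure))" "Q \<in> dyadic d"
  shows "Q \<in> sets M"
proof -
  obtain k m where "Q = dcube d k m" using assms(2) unfolding dyadic_def by auto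
  then show ?thesis unfolding assms(1) dcube_PiE by (auto intro!: sets_PiM_I_finite)
qed

lemma space_setting:
  assumes "sets M = sets (\<Pi>\<^sub>M i\<in>{..<d}. (borel :: real measure))"
  shows "space M = SP d"
  using sets_eq_imp_space_eq[OF assms] by (simp add: space_PiM)



lemma setting_dpos: assumes "dyadic_setting d M" shows "0 < d"
proof (rule ccontr)
  assume "\<not> 0 < d" then have d0: "d = 0" by simp
  have "dcube 0 0 (\<lambda>_. 0) = quadrant 0 (\<lambda>_. True)"
    unfolding dcube_def quadrant_def by auto
  moreover have "dcube 0 0 (\<lambda>_. 0) \<in> dyadic 0" unfolding dyadic_def by blast
  ultimately show False using assms d0 unfolding dyadic_setting_def by auto
qed

lemma lint_eq: "(LINT x:Q|M. g x) = (\<integral>x. g x * indicator Q x \<partial>M)" for g :: "_ \<Rightarrow> real"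
  by (simp add: set_lebesgue_integral_def mult.commute)

locale czs =
  fixes d :: nat and M :: "(nat \<Rightarrow> real) measure" and f :: "(nat \<Rightarrow> real) \<Rightarrow> real" and lam :: real
  assumes setting: "dyadic_setting d M" and intf: "integrable M f" and lam: "0 < lam"
begin

lemma dpos: "0 < d" using setting_dpos[OF setting] .

lemma sets_eq: "sets M = sets (\<Pi>\<^sub>M i\<in>{..<d}. (borel :: real measure))"
  using setting unfolding dyadic_setting_def by blast

lemma spaceM: "space M = SP d" using space_setting[OF sets_eq] .

lemma dy_sets: "Q \<in> dyadic d \<Longrightarrow> Q \<in> sets M" using dyadic_sets[OF sets_eq] .

lemma dy_fin: "Q \<in> dyadic d \<Longrightarrow> emeasure M Q < \<infinity>"
  using setting unfolding dyadic_setting_def by blast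

lemma dy_emeasure: "Q \<in> dyadic d \<Longrightarrow> emeasure M Q = ennreal (measure M Q)"
  using dy_fin[of Q] by (intro emeasure_eq_ennreal_measure) (simp add: less_top)

lemma int_ind: "Q \<in> dyadic d \<Longrightarrow> integrable M (indicator Q :: _ \<Rightarrow> real)"
  using dy_sets dy_fin dyadic_sub_SP spaceM
  by (simp add: integrable_indicator_iff Int_absorb2)

lemma int_f_ind: "Q \<in> sets M \<Longrightarrow> integrable M (\<lambda>x. f x * indicator Q x)"
  using integrable_mult_indicator[OF _ intf, of Q] by (simp add: mult.commute)

lemma int_absf_ind: "Q \<in> sets M \<Longrightarrow> integrable M (\<lambda>x. \<bar>f x\<bar> * indicator Q x)"
  using integrable_mult_indicator[OF _ integrable_abs[OF intf], of Q] by (simp add: mult.commute)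

definition J :: "(nat \<Rightarrow> real) set \<Rightarrow> real" where
  "J Q = (\<integral>x. \<bar>f x\<bar> * indicator Q x \<partial>M)"

definition I :: "(nat \<Rightarrow> real) set \<Rightarrow> real" where
  "I Q = (\<integral>x. f x * indicator Q x \<partial>M)"

lemma J_nonneg: "0 \<le> J Q" unfolding J_def by (intro integral_nonneg_AE) auto

lemma I_le_J: "\<bar>I Q\<bar> \<le> J Q"
proof -
  have "\<bar>I Q\<bar> \<le> (\<integral>x. \<bar>f x * indicator Q x\<bar> \<partial>M)" unfolding I_def by (rule integral_abs_bound)
  also have "\<dots> = J Q" unfolding J_def by (simp add: abs_mult)
  finally show ?thesis .
qed

lemma avg_f: "avg M f Q = (if measure M Q = 0 then 0 else I Q / measure M Q)"
  unfolding avg_def I_def lint_eq ..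

lemma avg_absf: "avg M (\<lambda>y. \<bar>f y\<bar>) Q = (if measure M Q = 0 then 0 else J Q / measure M Q)"
  unfolding avg_def J_def lint_eq ..

lemma abs_avg_le: "\<bar>avg M f Q\<bar> \<le> avg M (\<lambda>y. \<bar>f y\<bar>) Q"
  unfolding avg_f avg_absf using I_le_J[of Q]
  by (auto simp: abs_div divide_right_mono)

lemma J_mono: "Q \<in> sets M \<Longrightarrow> R \<in> sets M \<Longrightarrow> Q \<subseteq> R \<Longrightarrow> J Q \<le> J R"
  unfolding J_def by (intro integral_mono int_absf_ind) (auto split: split_indicator)

lemma J_le_total: "Q \<in> sets M \<Longrightarrow> J Q \<le> (\<integral>x. \<bar>f x\<bar> \<partial>M)"
  unfolding J_def by (intro integral_mono int_absf_ind integrable_abs intf) (auto split: split_indicator)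

abbreviation MC where "MC \<equiv> maxcubes d M f lam"

lemma mc_iff: "Q \<in> MC \<longleftrightarrow> Q \<in> dyadic d \<and> lam < avg M (\<lambda>y. \<bar>f y\<bar>) Q
      \<and> (\<forall>R \<in> dyadic d. Q \<subset> R \<longrightarrow> avg M (\<lambda>y. \<bar>f y\<bar>) R \<le> lam)"
  unfolding maxcubes_def by (rule mem_Collect_eq)

lemma mc_dy: "Q \<in> MC \<Longrightarrow> Q \<in> dyadic d" unfolding mc_iff by (elim conjE)

lemma mc_sets: "Q \<in> MC \<Longrightarrow> Q \<in> sets M" using mc_dy dy_sets by blast

lemma mc_pos: "Q \<in> MC \<Longrightarrow> 0 < measure M Q"
proof -
  assume Q: "Q \<in> MC"
  then have "lam < avg M (\<lambda>y. \<bar>f y\<bar>) Q" unfolding mc_iff by (elim conjE)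
  then have "measure M Q \<noteq> 0" using lam unfolding avg_absf by auto
  then show ?thesis using measure_nonneg[of M Q] by linarith
qed

lemma mc_big: "Q \<in> MC \<Longrightarrow> lam * measure M Q < J Q"
proof -
  assume Q: "Q \<in> MC"
  then have "lam < avg M (\<lambda>y. \<bar>f y\<bar>) Q" unfolding mc_iff by (elim conjE)
  then have "lam < J Q / measure M Q" using mc_pos[OF Q] unfolding avg_absf by auto
  then show ?thesis using mc_pos[OF Q] by (simp add: pos_less_divide_eq mult.commute)
qed

lemma mc_par_dy: "Q \<in> MC \<Longrightarrow> dparent d Q \<in> dyadic d"
  using dparent_props[OF dpos] mc_dy by blast

lemma mc_sub_par: "Q \<in> MC \<Longrightarrow> Q \<subset> dparent d Q"
  using dparent_props[OF dpos] mc_dy by blast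

lemma mc_par_avg: "Q \<in> MC \<Longrightarrow> avg M (\<lambda>y. \<bar>f y\<bar>) (dparent d Q) \<le> lam"
  using mc_par_dy[of Q] mc_sub_par[of Q] unfolding mc_iff by blast

lemma mc_par_meas: "Q \<in> MC \<Longrightarrow> measure M Q \<le> measure M (dparent d Q)"
  using mc_par_dy mc_sub_par mc_dy dy_sets dy_fin
  by (intro measure_mono_fmeasurable) (auto simp: fmeasurable_def)

lemma mc_par_pos: "Q \<in> MC \<Longrightarrow> 0 < measure M (dparent d Q)"
  using mc_par_meas mc_pos by fastforce

lemma mc_par_J: "Q \<in> MC \<Longrightarrow> J (dparent d Q) \<le> lam * measure M (dparent d Q)"
  using mc_par_avg[of Q] mc_par_pos[of Q] unfolding avg_absf
  by (simp add: pos_divide_le_eq mult.commute)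

lemma mc_par_abs_avg: "Q \<in> MC \<Longrightarrow> \<bar>avg M f (dparent d Q)\<bar> \<le> lam"
  using abs_avg_le mc_par_avg order_trans by blast

lemma mc_disj: "Q \<in> MC \<Longrightarrow> Q' \<in> MC \<Longrightarrow> Q \<noteq> Q' \<Longrightarrow> Q \<inter> Q' = {}"
proof (rule ccontr)
  assume Q: "Q \<in> MC" and Q': "Q' \<in> MC" and ne: "Q \<noteq> Q'" and "Q \<inter> Q' \<noteq> {}"
  then obtain z where "z \<in> Q" "z \<in> Q'" by blast
  then have "Q \<subseteq> Q' \<or> Q' \<subseteq> Q" using nested_or_disjoint mc_dy Q Q' by blast
  then have "Q \<subset> Q' \<or> Q' \<subset> Q" using ne by blast
  then show False
  proof
    assume "Q \<subset> Q'"
    then have "avg M (\<lambda>y. \<bar>f y\<bar>) Q' \<le> lam" using Q mc_dy[OF Q'] unfolding mc_iff by blast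
    then show False using Q' unfolding mc_iff by auto
  next
    assume "Q' \<subset> Q"
    then have "avg M (\<lambda>y. \<bar>f y\<bar>) Q \<le> lam" using Q' mc_dy[OF Q] unfolding mc_iff by blast
    then show False using Q unfolding mc_iff by auto
  qed
qed

lemma key_c: "Q \<in> MC \<Longrightarrow> \<bar>avg M f Q - avg M f (dparent d Q)\<bar> * measure M Q \<le> 2 * J Q"
proof -
  assume Q: "Q \<in> MC"
  have p: "0 < measure M Q" using mc_pos[OF Q] .
  have "\<bar>avg M f Q\<bar> * measure M Q = \<bar>I Q\<bar>" using p unfolding avg_f by (simp add: abs_div)
  also have "\<dots> \<le> J Q" by (rule I_le_J)
  finally have a: "\<bar>avg M f Q\<bar> * measure M Q \<le> J Q" .
  have "\<bar>avg M f (dparent d Q)\<bar> * measure M Q \<le> lam * measure M Q"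
    using mc_par_abs_avg[OF Q] p by (simp add: mult_right_mono)
  also have "\<dots> \<le> J Q" using mc_big[OF Q] by simp
  finally have b: "\<bar>avg M f (dparent d Q)\<bar> * measure M Q \<le> J Q" .
  have "\<bar>avg M f Q - avg M f (dparent d Q)\<bar> * measure M Q
      \<le> (\<bar>avg M f Q\<bar> + \<bar>avg M f (dparent d Q)\<bar>) * measure M Q"
    using p by (intro mult_right_mono) auto
  then show ?thesis using a b by (simp add: distrib_right)
qed

lemma sum_ind_disj:
  assumes "finite F" "\<And>Q Q'. Q \<in> F \<Longrightarrow> Q' \<in> F \<Longrightarrow> Q \<noteq> Q' \<Longrightarrow> Q \<inter> Q' = {}"
  shows "(\<Sum>Q\<in>F. indicator Q x) \<le> (1::real)"
proof (cases "\<exists>Q\<in>F. x \<in> Q")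
  case True
  then obtain Q0 where Q0: "Q0 \<in> F" "x \<in> Q0" by blast
  have "(\<Sum>Q\<in>F. indicator Q x) = indicator Q0 x + (\<Sum>Q\<in>F - {Q0}. indicator Q x)"
    using assms(1) Q0 by (simp add: sum.remove)
  also have "(\<Sum>Q\<in>F - {Q0}. indicator Q x) = (0::real)"
    using assms(2)[of Q0] Q0 by (intro sum.neutral) (auto simp: indicator_def)
  finally show ?thesis using Q0 by simp
next
  case False then show ?thesis by (simp add: indicator_def)
qed

lemma sum_J_le:
  assumes F: "finite F" "F \<subseteq> MC"
  shows "(\<Sum>Q\<in>F. J Q) \<le> (\<integral>x. \<bar>f x\<bar> \<partial>M)"
proof -
  have "(\<integral>x. (\<Sum>Q\<in>F. \<bar>f x\<bar> * indicator Q x) \<partial>M) = (\<Sum>Q\<in>F. \<integral>x. \<bar>f x\<bar> * indicator Q x \<partial>M)"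
    using F mc_sets by (intro Bochner_Integration.integral_sum int_absf_ind) auto
  then have "(\<Sum>Q\<in>F. J Q) = (\<integral>x. (\<Sum>Q\<in>F. \<bar>f x\<bar> * indicator Q x) \<partial>M)"
    unfolding J_def by simp
  also have "\<dots> \<le> (\<integral>x. \<bar>f x\<bar> \<partial>M)"
  proof (intro integral_mono integrable_abs intf)
    show "integrable M (\<lambda>x. \<Sum>Q\<in>F. \<bar>f x\<bar> * indicator Q x)"
      using F mc_sets by (intro Bochner_Integration.integrable_sum int_absf_ind) auto
    fix x
    have "(\<Sum>Q\<in>F. \<bar>f x\<bar> * indicator Q x) = \<bar>f x\<bar> * (\<Sum>Q\<in>F. indicator Q x)"
      by (simp add: sum_distrib_left)
    also have "\<dots> \<le> \<bar>f x\<bar> * 1"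
      using sum_ind_disj[OF F(1)] mc_disj F(2) by (intro mult_left_mono) (auto simp: subset_iff)
    finally show "(\<Sum>Q\<in>F. \<bar>f x\<bar> * indicator Q x) \<le> \<bar>f x\<bar>" by simp
  qed
  finally show ?thesis .
qed

lemma nn_f: "(\<integral>\<^sup>+ x. ennreal \<bar>f x\<bar> \<partial>M) = ennreal (\<integral>x. \<bar>f x\<bar> \<partial>M)"
  by (intro nn_integral_eq_integral integrable_abs intf) auto

lemma infsum_bound:
  assumes "\<And>Q. Q \<in> MC \<Longrightarrow> g Q \<le> c * J Q" "0 \<le> c"
  shows "(\<Sum>\<^sub>\<infinity>Q\<in>MC. ennreal (g Q)) \<le> ennreal c * (\<integral>\<^sup>+ x. ennreal \<bar>f x\<bar> \<partial>M)"
proof (rule infsum_le_finite_sums)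
  show "(\<lambda>Q. ennreal (g Q)) summable_on MC" by (rule nonneg_summable_on_complete) simp
  fix F assume F: "finite F" "F \<subseteq> MC"
  have "(\<Sum>Q\<in>F. ennreal (g Q)) \<le> (\<Sum>Q\<in>F. ennreal (c * J Q))"
    using assms F by (intro sum_mono ennreal_leI) auto
  also have "\<dots> = ennreal (\<Sum>Q\<in>F. c * J Q)"
    using J_nonneg assms(2) by (intro sum_ennreal) auto
  also have "\<dots> \<le> ennreal (c * (\<integral>x. \<bar>f x\<bar> \<partial>M))"
    using sum_J_le[OF F] assms(2) by (intro ennreal_leI) (simp add: sum_distrib_left[symmetric] mult_left_mono)
  also have "\<dots> = ennreal c * (\<integral>\<^sup>+ x. ennreal \<bar>f x\<bar> \<partial>M)"
    unfolding nn_f using assms(2) by (simp add: ennreal_mult)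
  finally show "(\<Sum>Q\<in>F. ennreal (g Q)) \<le> ennreal c * (\<integral>\<^sup>+ x. ennreal \<bar>f x\<bar> \<partial>M)" .
qed

end


context czs begin

lemma meas_dy: "Q \<in> dyadic d \<Longrightarrow> measure M (Q \<inter> space M) = measure M Q"
  using dyadic_sub_SP spaceM by (simp add: Int_absorb2)

lemma b_eq: "CZ_b M f Q = (\<lambda>x. f x * indicator Q x - avg M f Q * indicator Q x)"
  by (rule ext) (simp add: CZ_b_def algebra_simps)

lemma b_props:
  assumes Q: "Q \<in> MC"
  shows "{x \<in> space M. CZ_b M f Q x \<noteq> 0} \<subseteq> Q"
    and "integrable M (CZ_b M f Q)"
    and "(\<integral>x. CZ_b M f Q x \<partial>M) = 0"
    and "(\<integral>\<^sup>+ x. ennreal \<bar>CZ_b M f Q x\<bar> \<partial>M) \<le> ennreal (2 * J Q)"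
proof -
  have Qd: "Q \<in> dyadic d" using mc_dy[OF Q] .
  have Qs: "Q \<in> sets M" using mc_sets[OF Q] .
  have p: "0 < measure M Q" using mc_pos[OF Q] .
  show "{x \<in> space M. CZ_b M f Q x \<noteq> 0} \<subseteq> Q"
    by (auto simp: CZ_b_def indicator_def)
  show int: "integrable M (CZ_b M f Q)"
    unfolding b_eq by (intro Bochner_Integration.integrable_diff int_f_ind Bochner_Integration.integrable_mult_right int_ind Qs Qd)
  have "(\<integral>x. CZ_b M f Q x \<partial>M) = I Q - avg M f Q * measure M Q"
    unfolding b_eq I_def
    using int_f_ind[OF Qs] int_ind[OF Qd] meas_dy[OF Qd] by simp
  also have "avg M f Q * measure M Q = I Q" using p unfolding avg_f by simp
  finally show "(\<integral>x. CZ_b M f Q x \<partial>M) = 0" by simp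
  have "(\<integral>x. \<bar>CZ_b M f Q x\<bar> \<partial>M) \<le> (\<integral>x. \<bar>f x\<bar> * indicator Q x + \<bar>avg M f Q\<bar> * indicator Q x \<partial>M)"
  proof (intro integral_mono Bochner_Integration.integrable_abs int Bochner_Integration.integrable_add int_absf_ind Bochner_Integration.integrable_mult_right int_ind Qs Qd)
    fix x show "\<bar>CZ_b M f Q x\<bar> \<le> \<bar>f x\<bar> * indicator Q x + \<bar>avg M f Q\<bar> * indicator Q x"
      by (auto simp: CZ_b_def indicator_def)
  qed
  also have "\<dots> = J Q + \<bar>avg M f Q\<bar> * measure M Q"
    unfolding J_def using int_absf_ind[OF Qs] int_ind[OF Qd] meas_dy[OF Qd] by simp
  also have "\<bar>avg M f Q\<bar> * measure M Q = \<bar>I Q\<bar>" using p unfolding avg_f by (simp add: abs_div)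
  also have "J Q + \<bar>I Q\<bar> \<le> 2 * J Q" using I_le_J[of Q] by simp
  finally have le: "(\<integral>x. \<bar>CZ_b M f Q x\<bar> \<partial>M) \<le> 2 * J Q" .
  have "(\<integral>\<^sup>+ x. ennreal \<bar>CZ_b M f Q x\<bar> \<partial>M) = ennreal (\<integral>x. \<bar>CZ_b M f Q x\<bar> \<partial>M)"
    by (intro nn_integral_eq_integral Bochner_Integration.integrable_abs int) auto
  then show "(\<integral>\<^sup>+ x. ennreal \<bar>CZ_b M f Q x\<bar> \<partial>M) \<le> ennreal (2 * J Q)"
    using le by (simp add: ennreal_leI)
qed

lemma beta_eq: "CZ_beta d M f Q = (\<lambda>x. (avg M f Q - avg M f (dparent d Q)) * indicator Q x
   - ((avg M f Q - avg M f (dparent d Q)) * (measure M Q / measure M (dparent d Q))) * indicator (dparent d Q) x)"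
  by (rule ext) (simp add: CZ_beta_def right_diff_distrib mult.assoc)

lemma beta_props:
  assumes Q: "Q \<in> MC"
  shows "{x \<in> space M. CZ_beta d M f Q x \<noteq> 0} \<subseteq> dparent d Q"
    and "integrable M (CZ_beta d M f Q)"
    and "(\<integral>x. CZ_beta d M f Q x \<partial>M) = 0"
    and "(\<integral>\<^sup>+ x. ennreal \<bar>CZ_beta d M f Q x\<bar> \<partial>M) \<le> ennreal (4 * J Q)"
proof -
  let ?c = "avg M f Q - avg M f (dparent d Q)"
  let ?r = "measure M Q / measure M (dparent d Q)"
  let ?P = "dparent d Q"
  have Qd: "Q \<in> dyadic d" using mc_dy[OF Q] .
  have Pd: "?P \<in> dyadic d" using mc_par_dy[OF Q] .
  have p: "0 < measure M Q" using mc_pos[OF Q] .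
  have pp: "0 < measure M ?P" using mc_par_pos[OF Q] .
  have sub: "Q \<subseteq> ?P" using mc_sub_par[OF Q] by blast
  show "{x \<in> space M. CZ_beta d M f Q x \<noteq> 0} \<subseteq> ?P"
    using sub by (auto simp: CZ_beta_def indicator_def)
  show int: "integrable M (CZ_beta d M f Q)"
    unfolding beta_eq by (intro Bochner_Integration.integrable_diff Bochner_Integration.integrable_mult_right int_ind Qd Pd)
  have "(\<integral>x. CZ_beta d M f Q x \<partial>M) = ?c * measure M Q - ?c * ?r * measure M ?P"
    unfolding beta_eq using int_ind[OF Qd] int_ind[OF Pd] meas_dy[OF Qd] meas_dy[OF Pd] by simp
  also have "?c * ?r * measure M ?P = ?c * measure M Q" using pp by simp
  finally show "(\<integral>x. CZ_beta d M f Q x \<partial>M) = 0" by simp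
  have "(\<integral>x. \<bar>CZ_beta d M f Q x\<bar> \<partial>M) \<le> (\<integral>x. \<bar>?c\<bar> * indicator Q x + (\<bar>?c\<bar> * ?r) * indicator ?P x \<partial>M)"
  proof (intro integral_mono Bochner_Integration.integrable_abs int Bochner_Integration.integrable_add Bochner_Integration.integrable_mult_right int_ind Qd Pd)
    fix x
    have r: "?r \<ge> 0" by simp
    have "\<bar>1 - ?r\<bar> \<le> 1 + ?r" using r by (simp add: abs_le_iff)
    then have a: "\<bar>?c\<bar> * \<bar>1 - ?r\<bar> \<le> \<bar>?c\<bar> + \<bar>?c\<bar> * ?r"
      using mult_left_mono[of "\<bar>1 - ?r\<bar>" "1 + ?r" "\<bar>?c\<bar>"] by (simp add: distrib_left)
    have b: "\<bar>?c\<bar> * \<bar>?r\<bar> \<le> \<bar>?c\<bar> * ?r" using r by simp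
    show "\<bar>CZ_beta d M f Q x\<bar> \<le> \<bar>?c\<bar> * indicator Q x + (\<bar>?c\<bar> * ?r) * indicator ?P x"
    proof (cases "x \<in> Q")
      case True then have "x \<in> ?P" using sub by blast
      then show ?thesis using True a unfolding CZ_beta_def by (simp add: abs_mult)
    next
      case False then show ?thesis using b unfolding CZ_beta_def by (simp add: abs_mult indicator_def)
    qed
  qed
  also have "\<dots> = \<bar>?c\<bar> * measure M Q + \<bar>?c\<bar> * ?r * measure M ?P"
    using int_ind[OF Qd] int_ind[OF Pd] meas_dy[OF Qd] meas_dy[OF Pd] by simp
  also have "\<dots> = 2 * (\<bar>?c\<bar> * measure M Q)" using pp by simp
  also have "\<dots> \<le> 2 * (2 * J Q)" using key_c[OF Q] by (simp add: mult.commute)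
  finally have le: "(\<integral>x. \<bar>CZ_beta d M f Q x\<bar> \<partial>M) \<le> 4 * J Q" by simp
  have "(\<integral>\<^sup>+ x. ennreal \<bar>CZ_beta d M f Q x\<bar> \<partial>M) = ennreal (\<integral>x. \<bar>CZ_beta d M f Q x\<bar> \<partial>M)"
    by (intro nn_integral_eq_integral Bochner_Integration.integrable_abs int) auto
  then show "(\<integral>\<^sup>+ x. ennreal \<bar>CZ_beta d M f Q x\<bar> \<partial>M) \<le> ennreal (4 * J Q)"
    using le by (simp add: ennreal_leI)
qed

lemma infsum_bound':
  assumes "\<And>Q. Q \<in> MC \<Longrightarrow> g Q \<le> ennreal (c * J Q)" "0 \<le> c"
  shows "(\<Sum>\<^sub>\<infinity>Q\<in>MC. g Q) \<le> ennreal c * (\<integral>\<^sup>+ x. ennreal \<bar>f x\<bar> \<partial>M)"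
proof -
  have "(\<Sum>\<^sub>\<infinity>Q\<in>MC. g Q) \<le> (\<Sum>\<^sub>\<infinity>Q\<in>MC. ennreal (c * J Q))"
    using assms(1) by (intro infsum_mono) (auto intro: nonneg_summable_on_complete)
  also have "\<dots> \<le> ennreal c * (\<integral>\<^sup>+ x. ennreal \<bar>f x\<bar> \<partial>M)"
    by (rule infsum_bound) (use assms(2) in auto)
  finally show ?thesis .
qed

lemma part_bc:
  "(\<forall>Q \<in> MC.
          {x \<in> space M. CZ_b M f Q x \<noteq> 0} \<subseteq> Q
        \<and> integrable M (CZ_b M f Q) \<and> (\<integral>x. CZ_b M f Q x \<partial>M) = 0)
    \<and> (\<Sum>\<^sub>\<infinity>Q \<in> MC. \<integral>\<^sup>+ x. ennreal \<bar>CZ_b M f Q x\<bar> \<partial>M)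
          \<le> 2 * (\<integral>\<^sup>+ x. ennreal \<bar>f x\<bar> \<partial>M)
    \<and> (\<forall>Q \<in> MC.
          {x \<in> space M. CZ_beta d M f Q x \<noteq> 0} \<subseteq> dparent d Q
        \<and> integrable M (CZ_beta d M f Q) \<and> (\<integral>x. CZ_beta d M f Q x \<partial>M) = 0)
    \<and> (\<Sum>\<^sub>\<infinity>Q \<in> MC. \<integral>\<^sup>+ x. ennreal \<bar>CZ_beta d M f Q x\<bar> \<partial>M)
          \<le> 4 * (\<integral>\<^sup>+ x. ennreal \<bar>f x\<bar> \<partial>M)"
proof (intro conjI ballI)
  fix Q assume Q: "Q \<in> MC"
  show "{x \<in> space M. CZ_b M f Q x \<noteq> 0} \<subseteq> Q" "integrable M (CZ_b M f Q)" "(\<integral>x. CZ_b M f Q x \<partial>M) = 0"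
    using b_props[OF Q] by auto
  show "{x \<in> space M. CZ_beta d M f Q x \<noteq> 0} \<subseteq> dparent d Q" "integrable M (CZ_beta d M f Q)"
    "(\<integral>x. CZ_beta d M f Q x \<partial>M) = 0"
    using beta_props[OF Q] by auto
next
  show "(\<Sum>\<^sub>\<infinity>Q \<in> MC. \<integral>\<^sup>+ x. ennreal \<bar>CZ_b M f Q x\<bar> \<partial>M) \<le> 2 * (\<integral>\<^sup>+ x. ennreal \<bar>f x\<bar> \<partial>M)"
    using infsum_bound'[of "\<lambda>Q. \<integral>\<^sup>+ x. ennreal \<bar>CZ_b M f Q x\<bar> \<partial>M" 2] b_props(4) by simp
  show "(\<Sum>\<^sub>\<infinity>Q \<in> MC. \<integral>\<^sup>+ x. ennreal \<bar>CZ_beta d M f Q x\<bar> \<partial>M) \<le> 4 * (\<integral>\<^sup>+ x. ennreal \<bar>f x\<bar> \<partial>M)"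
    using infsum_bound'[of "\<lambda>Q. \<integral>\<^sup>+ x. ennreal \<bar>CZ_beta d M f Q x\<bar> \<partial>M" 4] beta_props(4) by simp
qed

end


lemma infsum_seq:
  fixes I :: "'a set" assumes I: "countable I"
  obtains F where "\<And>n. finite (F n)" "\<And>n. F n \<subseteq> I" "incseq F"
    "\<And>g :: 'a \<Rightarrow> ennreal. (\<Sum>\<^sub>\<infinity>i\<in>I. g i) = (SUP n. sum g (F n))"
proof (cases "I = {}")
  case True
  show ?thesis by (rule that[of "\<lambda>_. {}"]) (auto simp: True incseq_def)
next
  case False
  define F where "F n = from_nat_into I ` {..<n}" for n
  have fin: "finite (F n)" for n unfolding F_def by simp
  have sub: "F n \<subseteq> I" for n unfolding F_def using from_nat_into[OF False] by auto
  have inc: "incseq F" unfolding F_def incseq_def by auto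
  have eq: "(\<Sum>\<^sub>\<infinity>i\<in>I. g i) = (SUP n. sum g (F n))" for g :: "'a \<Rightarrow> ennreal"
  proof -
    have "(\<Sum>\<^sub>\<infinity>i\<in>I. g i) = (SUP G\<in>{G. finite G \<and> G \<subseteq> I}. sum g G)"
      by (rule nonneg_infsum_complete) simp
    also have "\<dots> = (SUP n. sum g (F n))"
    proof (rule antisym)
      show "(SUP G\<in>{G. finite G \<and> G \<subseteq> I}. sum g G) \<le> (SUP n. sum g (F n))"
      proof (rule SUP_least)
        fix G assume "G \<in> {G. finite G \<and> G \<subseteq> I}"
        then have G: "finite G" "G \<subseteq> I" by auto
        obtain k where k: "to_nat_on I ` G \<subseteq> {..<k}"
          using finite_nat_bounded[of "to_nat_on I ` G"] G by auto
        have "G \<subseteq> F k"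
        proof
          fix i assume "i \<in> G"
          then have "i = from_nat_into I (to_nat_on I i)" "to_nat_on I i < k"
            using from_nat_into_to_nat_on[OF I] G k by auto
          then show "i \<in> F k" unfolding F_def by auto
        qed
        then have "sum g G \<le> sum g (F k)" by (intro sum_mono2 fin) auto
        also have "\<dots> \<le> (SUP n. sum g (F n))" by (rule SUP_upper) simp
        finally show "sum g G \<le> (SUP n. sum g (F n))" .
      qed
      show "(SUP n. sum g (F n)) \<le> (SUP G\<in>{G. finite G \<and> G \<subseteq> I}. sum g G)"
        using fin sub by (intro SUP_least SUP_upper) auto
    qed
    finally show ?thesis .
  qed
  show ?thesis by (rule that[OF fin sub inc eq])
qed

lemma measurable_infsum:
  assumes I: "countable I" and m: "\<And>i. i \<in> I \<Longrightarrow> \<phi> i \<in> borel_measurable M"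
  shows "(\<lambda>x. (\<Sum>\<^sub>\<infinity>i\<in>I. \<phi> i x :: ennreal)) \<in> borel_measurable M"
proof -
  obtain F where F: "\<And>n. finite (F n)" "\<And>n. F n \<subseteq> I" "incseq F"
    "\<And>g :: _ \<Rightarrow> ennreal. (\<Sum>\<^sub>\<infinity>i\<in>I. g i) = (SUP n. sum g (F n))"
    using infsum_seq[OF I] by metis
  have "(\<lambda>x. SUP n. (\<Sum>i\<in>F n. \<phi> i x)) \<in> borel_measurable M"
    using F(2) m by (intro borel_measurable_SUP borel_measurable_sum) auto
  then show ?thesis using F(4) by simp
qed

lemma nn_integral_infsum:
  assumes I: "countable I" and m: "\<And>i. i \<in> I \<Longrightarrow> \<phi> i \<in> borel_measurable M"
  shows "(\<integral>\<^sup>+x. (\<Sum>\<^sub>\<infinity>i\<in>I. \<phi> i x) \<partial>M) = (\<Sum>\<^sub>\<infinity>i\<in>I. \<integral>\<^sup>+x. \<phi> i x \<partial>M)"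
proof -
  obtain F where F: "\<And>n. finite (F n)" "\<And>n. F n \<subseteq> I" "incseq F"
    "\<And>g :: _ \<Rightarrow> ennreal. (\<Sum>\<^sub>\<infinity>i\<in>I. g i) = (SUP n. sum g (F n))"
    using infsum_seq[OF I] by metis
  have inc: "incseq (\<lambda>n x. \<Sum>i\<in>F n. \<phi> i x)"
    using F(1,3) by (auto simp: incseq_def le_fun_def intro!: sum_mono2)
  have "(\<integral>\<^sup>+x. (\<Sum>\<^sub>\<infinity>i\<in>I. \<phi> i x) \<partial>M) = (\<integral>\<^sup>+x. (SUP n. \<Sum>i\<in>F n. \<phi> i x) \<partial>M)"
    using F(4) by simp
  also have "\<dots> = (SUP n. \<integral>\<^sup>+x. (\<Sum>i\<in>F n. \<phi> i x) \<partial>M)"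
    using F(2) m by (intro nn_integral_monotone_convergence_SUP[OF inc] borel_measurable_sum) auto
  also have "\<dots> = (SUP n. \<Sum>i\<in>F n. \<integral>\<^sup>+x. \<phi> i x \<partial>M)"
    using F(2) m by (intro SUP_cong refl nn_integral_sum) auto
  also have "\<dots> = (\<Sum>\<^sub>\<infinity>i\<in>I. \<integral>\<^sup>+x. \<phi> i x \<partial>M)" using F(4) by simp
  finally show ?thesis .
qed

lemma pow_split: "(a + b :: ennreal) ^ Suc n \<le> of_nat (Suc n) * a * (a + b) ^ n + b ^ Suc n"
proof (induction n)
  case 0 then show ?case by simp
next
  case (Suc n)
  have "(a + b) ^ Suc (Suc n) = (a + b) * (a + b) ^ Suc n" by simp
  also have "\<dots> \<le> (a + b) * (of_nat (Suc n) * a * (a + b) ^ n + b ^ Suc n)"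
    by (intro mult_left_mono Suc.IH) simp
  also have "\<dots> = of_nat (Suc n) * a * (a + b) ^ Suc n + a * b ^ Suc n + b ^ Suc (Suc n)"
    by (simp add: algebra_simps)
  also have "a * b ^ Suc n \<le> a * (a + b) ^ Suc n"
    by (intro mult_left_mono power_mono) auto
  finally have "(a + b) ^ Suc (Suc n) \<le> of_nat (Suc n) * a * (a + b) ^ Suc n + a * (a + b) ^ Suc n + b ^ Suc (Suc n)"
    by (simp add: add_mono)
  also have "\<dots> = of_nat (Suc (Suc n)) * a * (a + b) ^ Suc n + b ^ Suc (Suc n)"
    by (simp add: algebra_simps)
  finally show ?case .
qed

lemma least_elem:
  assumes "finite T" "T \<noteq> {}" "\<forall>t\<in>T. \<forall>s\<in>T. r t s \<or> r s t"
    "\<forall>t\<in>T. \<forall>s\<in>T. \<forall>u\<in>T. r t s \<longrightarrow> r s u \<longrightarrow> r t u"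
  shows "\<exists>t0\<in>T. \<forall>s\<in>T. r t0 s"
  using assms
proof (induction T rule: finite_ne_induct)
  case (singleton x)
  have "r x x" using singleton by blast
  then show ?case by simp
next
  case (insert x F)
  have "\<forall>t\<in>F. \<forall>s\<in>F. r t s \<or> r s t" using insert.prems(1) by (meson insertCI)
  moreover have "\<forall>t\<in>F. \<forall>s\<in>F. \<forall>u\<in>F. r t s \<longrightarrow> r s u \<longrightarrow> r t u" using insert.prems(2) by (meson insertCI)
  ultimately obtain t0 where t0: "t0 \<in> F" "\<forall>s\<in>F. r t0 s" using insert.IH by blast
  have tot: "\<And>t s. t \<in> insert x F \<Longrightarrow> s \<in> insert x F \<Longrightarrow> r t s \<or> r s t"
    using insert.prems(1) by blast
  have tr: "\<And>t s u. t \<in> insert x F \<Longrightarrow> s \<in> insert x F \<Longrightarrow> u \<in> insert x F \<Longrightarrow> r t s \<Longrightarrow> r s u \<Longrightarrow> r t u"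
    using insert.prems(2) by blast
  show ?case
  proof (cases "r x t0")
    case True
    have "r x s" if s: "s \<in> insert x F" for s
    proof (cases "s = x")
      case True then show ?thesis using tot[of x x] by auto
    next
      case False then have "s \<in> F" using s by auto
      then show ?thesis using tr[of x t0 s] \<open>r x t0\<close> t0 by auto
    qed
    then show ?thesis by blast
  next
    case False
    then have "r t0 x" using tot[of x t0] t0 by auto
    then have "\<forall>s\<in>insert x F. r t0 s" using t0 by auto
    then show ?thesis using t0 by blast
  qed
qed

lemma chain_pow:
  fixes w :: "'a \<Rightarrow> ennreal"
  assumes "finite T" "\<forall>t\<in>T. \<forall>s\<in>T. r t s \<or> r s t"
    "\<forall>t\<in>T. \<forall>s\<in>T. \<forall>u\<in>T. r t s \<longrightarrow> r s u \<longrightarrow> r t u"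
  shows "(\<Sum>t\<in>T. w t) ^ Suc n \<le> of_nat (Suc n) * (\<Sum>t\<in>T. w t * (\<Sum>s\<in>{s\<in>T. r t s}. w s) ^ n)"
  using assms
proof (induction "card T" arbitrary: T rule: less_induct)
  case less
  show ?case
  proof (cases "T = {}")
    case True then show ?thesis by simp
  next
    case False
    obtain t0 where t0: "t0 \<in> T" "\<forall>s\<in>T. r t0 s" using least_elem[OF less.prems(1) False less.prems(2,3)] by blast
    define T0 where "T0 = T - {t0}"
    have fin: "finite T" using less.prems(1) .
    have sub: "T0 \<subseteq> T" unfolding T0_def by blast
    have fin0: "finite T0" using fin sub finite_subset by blast
    have card0: "card T0 < card T" unfolding T0_def using fin t0(1) by (rule card_Diff1_less)
    have tot0: "\<forall>t\<in>T0. \<forall>s\<in>T0. r t s \<or> r s t"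
    proof (intro ballI)
      fix t s assume "t \<in> T0" "s \<in> T0"
      then have "t \<in> T" "s \<in> T" using sub by auto
      then show "r t s \<or> r s t" using less.prems(2) by blast
    qed
    have tr0: "\<forall>t\<in>T0. \<forall>s\<in>T0. \<forall>u\<in>T0. r t s \<longrightarrow> r s u \<longrightarrow> r t u"
    proof (intro ballI)
      fix t s u assume "t \<in> T0" "s \<in> T0" "u \<in> T0"
      then have "t \<in> T" "s \<in> T" "u \<in> T" using sub by auto
      then show "r t s \<longrightarrow> r s u \<longrightarrow> r t u" using less.prems(3) by blast
    qed
    have IH: "(\<Sum>t\<in>T0. w t) ^ Suc n \<le> of_nat (Suc n) * (\<Sum>t\<in>T0. w t * (\<Sum>s\<in>{s\<in>T0. r t s}. w s) ^ n)"
      by (rule less.hyps[OF card0 fin0 tot0 tr0])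
    have tail0: "{s\<in>T. r t0 s} = T" using t0 by auto
    have sumT: "(\<Sum>t\<in>T. w t) = w t0 + (\<Sum>t\<in>T0. w t)"
      unfolding T0_def using fin t0(1) by (rule sum.remove)
    have "(\<Sum>t\<in>T. w t) ^ Suc n \<le> of_nat (Suc n) * w t0 * (\<Sum>t\<in>T. w t) ^ n + (\<Sum>t\<in>T0. w t) ^ Suc n"
      unfolding sumT by (rule pow_split)
    also have "\<dots> \<le> of_nat (Suc n) * w t0 * (\<Sum>t\<in>T. w t) ^ n + of_nat (Suc n) * (\<Sum>t\<in>T0. w t * (\<Sum>s\<in>{s\<in>T0. r t s}. w s) ^ n)"
      by (rule add_left_mono[OF IH])
    also have "(\<Sum>t\<in>T0. w t * (\<Sum>s\<in>{s\<in>T0. r t s}. w s) ^ n) \<le> (\<Sum>t\<in>T0. w t * (\<Sum>s\<in>{s\<in>T. r t s}. w s) ^ n)"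
    proof (intro sum_mono mult_left_mono power_mono sum_mono2)
      show "finite {s \<in> T. r t s}" for t using fin by simp
      show "{s \<in> T0. r t s} \<subseteq> {s \<in> T. r t s}" for t using sub by blast
    qed auto
    finally have "(\<Sum>t\<in>T. w t) ^ Suc n \<le> of_nat (Suc n) * w t0 * (\<Sum>t\<in>T. w t) ^ n + of_nat (Suc n) * (\<Sum>t\<in>T0. w t * (\<Sum>s\<in>{s\<in>T. r t s}. w s) ^ n)"
      by (simp add: mult_left_mono add_left_mono)
    also have "\<dots> = of_nat (Suc n) * (w t0 * (\<Sum>t\<in>T. w t) ^ n + (\<Sum>t\<in>T0. w t * (\<Sum>s\<in>{s\<in>T. r t s}. w s) ^ n))"
      by (simp add: distrib_left mult.assoc)
    also have "w t0 * (\<Sum>t\<in>T. w t) ^ n + (\<Sum>t\<in>T0. w t * (\<Sum>s\<in>{s\<in>T. r t s}. w s) ^ n)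
        = (\<Sum>t\<in>T. w t * (\<Sum>s\<in>{s\<in>T. r t s}. w s) ^ n)"
      unfolding T0_def using sum.remove[OF fin t0(1), of "\<lambda>t. w t * (\<Sum>s\<in>{s\<in>T. r t s}. w s) ^ n"] tail0
      by simp
    finally show ?thesis .
  qed
qed



lemma cub_sub_gen:
  assumes d: "0 < d" and z: "z \<in> SP d" and sub: "cub d i z \<subseteq> cub d j z"
  shows "j \<le> i"
proof (rule ccontr)
  assume "\<not> j \<le> i" then have "i < j" by simp
  then have "cub d j z \<subseteq> cub d i z" using cub_mono[of i j d z] by simp
  then have "cub d i z = cub d j z" using sub by blast
  then show False using gen_unique[OF d z z, of i j] \<open>i < j\<close> by simp
qed

lemma sub_cubes_finite:
  assumes d: "0 < d" and Q: "Q \<in> dyadic d" and R: "R \<in> dyadic d" and QR: "Q \<subseteq> R"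
  shows "finite {Q' \<in> dyadic d. Q \<subseteq> Q' \<and> Q' \<subseteq> R}"
proof -
  obtain k0 m0 where "Q = dcube d k0 m0" using Q unfolding dyadic_def by blast
  then obtain z where z: "z \<in> Q" using dcube_ne[of d k0 m0] by blast
  have zS: "z \<in> SP d" using z Q dyadic_sub_SP by blast
  obtain k where k: "Q = cub d k z" using dyadic_at[OF Q z] by blast
  have zR: "z \<in> R" using z QR by blast
  obtain j where j: "R = cub d j z" using dyadic_at[OF R zR] by blast
  have "{Q' \<in> dyadic d. Q \<subseteq> Q' \<and> Q' \<subseteq> R} \<subseteq> (\<lambda>i. cub d i z) ` {j..k}"
  proof
    fix Q' assume Q': "Q' \<in> {Q' \<in> dyadic d. Q \<subseteq> Q' \<and> Q' \<subseteq> R}"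
    then have Q'd: "Q' \<in> dyadic d" and s1: "Q \<subseteq> Q'" and s2: "Q' \<subseteq> R" by auto
    have zQ': "z \<in> Q'" using z s1 by blast
    obtain i where i: "Q' = cub d i z" using dyadic_at[OF Q'd zQ'] by blast
    have "i \<le> k" using cub_sub_gen[OF d zS, of k i] s1 k i by simp
    moreover have "j \<le> i" using cub_sub_gen[OF d zS, of i j] s2 j i by simp
    ultimately show "Q' \<in> (\<lambda>i. cub d i z) ` {j..k}" using i by auto
  qed
  then show ?thesis by (rule finite_subset) simp
qed

lemma dyadic_Int:
  assumes "Q \<in> dyadic d" "R \<in> dyadic d"
  shows "Q \<inter> R = Q \<or> Q \<inter> R = R \<or> Q \<inter> R = {}"
proof (cases "Q \<inter> R = {}")
  case False
  then obtain z where "z \<in> Q" "z \<in> R" by blast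
  then have "Q \<subseteq> R \<or> R \<subseteq> Q" using nested_or_disjoint[OF assms] by blast
  then show ?thesis by blast
qed simp

context czs begin

lemma notOmega:
  assumes x: "x \<in> space M" "x \<notin> Omega d M f lam" and R: "R \<in> dyadic d" "x \<in> R"
  shows "avg M (\<lambda>y. \<bar>f y\<bar>) R \<le> lam"
proof -
  have "\<not> dyadic_max d M f x > ereal lam" using x unfolding Omega_def by simp
  then have le: "dyadic_max d M f x \<le> ereal lam" by simp
  have "ereal (avg M (\<lambda>y. \<bar>f y\<bar>) R) \<le> dyadic_max d M f x"
    unfolding dyadic_max_def using R by (intro SUP_upper) simp
  then have "ereal (avg M (\<lambda>y. \<bar>f y\<bar>) R) \<le> ereal lam" using le by (rule order_trans)
  then show ?thesis by simp
qed

lemma Omega_eq: "Omega d M f lam = space M \<inter> \<Union>{R \<in> dyadic d. lam < avg M (\<lambda>y. \<bar>f y\<bar>) R}"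
proof -
  have "x \<in> Omega d M f lam \<longleftrightarrow> x \<in> space M \<inter> \<Union>{R \<in> dyadic d. lam < avg M (\<lambda>y. \<bar>f y\<bar>) R}" for x
  proof -
    have "ereal lam < dyadic_max d M f x \<longleftrightarrow> (\<exists>R\<in>{Q \<in> dyadic d. x \<in> Q}. ereal lam < ereal (avg M (\<lambda>y. \<bar>f y\<bar>) R))"
      unfolding dyadic_max_def by (rule less_SUP_iff)
    then show ?thesis unfolding Omega_def by auto
  qed
  then show ?thesis by blast
qed

lemma Omega_sets: "Omega d M f lam \<in> sets M"
proof -
  have "\<Union>{R \<in> dyadic d. lam < avg M (\<lambda>y. \<bar>f y\<bar>) R} \<in> sets M"
    using countable_dyadic dy_sets by (intro sets.countable_Union) (auto intro: countable_subset)
  then show ?thesis unfolding Omega_eq by auto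
qed

definition GR :: "(nat \<Rightarrow> real) set \<Rightarrow> (nat \<Rightarrow> real) set set" where
  "GR R = insert {} {Q \<in> dyadic d. Q \<subseteq> R}"

lemma GR_sets: "GR R \<subseteq> sets M" unfolding GR_def using dy_sets by auto

lemma GR_Pow: "GR R \<subseteq> Pow R" unfolding GR_def by auto

lemma GR_countable: "countable (GR R)"
  unfolding GR_def using countable_dyadic by (auto intro: countable_subset)

lemma GR_Int: "Q \<in> GR R \<Longrightarrow> Q' \<in> GR R \<Longrightarrow> Q \<inter> Q' \<in> GR R"
proof -
  assume Q: "Q \<in> GR R" and Q': "Q' \<in> GR R"
  show "Q \<inter> Q' \<in> GR R"
  proof (cases "Q = {} \<or> Q' = {}")
    case True then show ?thesis unfolding GR_def by auto
  next
    case False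
    then have "Q \<in> dyadic d" "Q' \<in> dyadic d" using Q Q' unfolding GR_def by auto
    then have "Q \<inter> Q' = Q \<or> Q \<inter> Q' = Q' \<or> Q \<inter> Q' = {}" by (rule dyadic_Int)
    then show ?thesis using Q Q' unfolding GR_def by auto
  qed
qed

lemma sigma_sub_sets: "R \<in> sets M \<Longrightarrow> B \<in> sigma_sets R (GR R) \<Longrightarrow> B \<in> sets M"
proof -
  assume R: "R \<in> sets M"
  assume "B \<in> sigma_sets R (GR R)"
  then show "B \<in> sets M"
  proof (induction rule: sigma_sets.induct)
    case (Basic a) then show ?case using GR_sets by auto
  next
    case Empty then show ?case by simp
  next
    case (Compl a) then show ?case using R by auto
  next
    case (Union a) then show ?case by auto
  qed
qed

lemma halfspace_sigma:
  assumes R: "R \<in> dyadic d" and i: "i < d"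
  shows "{x \<in> SP d. x i < a} \<inter> R \<in> sigma_sets R (GR R)"
proof -
  let ?F = "{Q \<in> GR R. Q \<subseteq> {x. x i < a}}"
  have eq: "{x \<in> SP d. x i < a} \<inter> R = \<Union>?F"
  proof
    show "\<Union>?F \<subseteq> {x \<in> SP d. x i < a} \<inter> R" unfolding GR_def using R dyadic_sub_SP by auto
    show "{x \<in> SP d. x i < a} \<inter> R \<subseteq> \<Union>?F"
    proof
      fix x assume x: "x \<in> {x \<in> SP d. x i < a} \<inter> R"
      then have xS: "x \<in> SP d" and xi: "x i < a" and xR: "x \<in> R" by auto
      obtain j where j: "R = cub d j x" using dyadic_at[OF R xR] by blast
      obtain n :: nat where n: "1 / (a - x i) < 2 ^ n" using real_arch_pow[of 2 "1 / (a - x i)"] by auto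
      define k where "k = max j (int n)"
      have kj: "j \<le> k" unfolding k_def by simp
      have pk: "2 powr real_of_int k \<ge> 2 ^ n"
      proof -
        have "2 powr real_of_int k \<ge> 2 powr real n" unfolding k_def by (intro powr_mono) auto
        then show ?thesis by (simp add: powr_realpow)
      qed
      have small: "1 / 2 powr real_of_int k < a - x i"
      proof -
        have "1 / (a - x i) < 2 powr real_of_int k" using n pk by linarith
        then show ?thesis using xi by (simp add: field_simps)
      qed
      have sub1: "cub d k x \<subseteq> R" using j cub_mono[OF kj] by simp
      have sub2: "cub d k x \<subseteq> {x. x i < a}"
      proof
        fix y assume "y \<in> cub d k x"
        then have fl: "\<lfloor>2 powr real_of_int k * y i\<rfloor> = \<lfloor>2 powr real_of_int k * x i\<rfloor>"
          using i unfolding mem_cub by auto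
        have p: "0 < 2 powr real_of_int k" by simp
        have "2 powr real_of_int k * y i < \<lfloor>2 powr real_of_int k * x i\<rfloor> + 1"
          using fl by linarith
        also have "\<dots> \<le> 2 powr real_of_int k * x i + 1" by simp
        finally have "2 powr real_of_int k * y i < 2 powr real_of_int k * x i + 1" .
        then have "y i < x i + 1 / 2 powr real_of_int k" using p by (simp add: field_simps)
        then show "y \<in> {x. x i < a}" using small by simp
      qed
      have "cub d k x \<in> ?F" using sub1 sub2 cub_dyadic[OF xS] unfolding GR_def by auto
      moreover have "x \<in> cub d k x" using cub_self[OF xS] .
      ultimately show "x \<in> \<Union>?F" by blast
    qed
  qed
  have "\<Union>?F \<in> sigma_sets R (GR R)"
  proof (rule sigma_algebra.countable_Union[OF sigma_algebra_sigma_sets])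
    show "GR R \<subseteq> Pow R" by (rule GR_Pow)
    show "countable ?F" using GR_countable by (auto intro: countable_subset)
    show "?F \<subseteq> sigma_sets R (GR R)" by auto
  qed
  then show ?thesis using eq by simp
qed

lemma coord_sigma:
  assumes R: "R \<in> dyadic d" and i: "i < d" and A: "A \<in> sets borel"
  shows "{x \<in> SP d. x i \<in> A} \<inter> R \<in> sigma_sets R (GR R)"
proof -
  have RS: "R \<subseteq> SP d" using dyadic_sub_SP[OF R] .
  have "A \<in> sigma_sets UNIV (range lessThan)"
    using A unfolding borel_Iio by (simp add: sets_measure_of)
  then show ?thesis
  proof (induction rule: sigma_sets.induct)
    case (Basic a)
    then obtain b where "a = {..<b}" by auto
    then show ?case using halfspace_sigma[OF R i, of b] by simp
  next
    case Empty then show ?case by (simp add: sigma_sets.Empty)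
  next
    case (Compl a)
    have "{x \<in> SP d. x i \<in> UNIV - a} \<inter> R = R - ({x \<in> SP d. x i \<in> a} \<inter> R)" using RS by auto
    then show ?case using Compl.IH by (simp add: sigma_sets.Compl)
  next
    case (Union a)
    have e: "{x \<in> SP d. x i \<in> \<Union>(range a)} \<inter> R = (\<Union>j. {x \<in> SP d. x i \<in> a j} \<inter> R)" by auto
    have "(\<Union>j. {x \<in> SP d. x i \<in> a j} \<inter> R) \<in> sigma_sets R (GR R)"
      by (rule sigma_sets.Union) (rule Union.IH)
    then show ?case by (subst e)
  qed
qed

lemma sets_in_sigma:
  assumes R: "R \<in> dyadic d" and B: "B \<in> sets M"
  shows "B \<inter> R \<in> sigma_sets R (GR R)"
proof -
  have RS: "R \<subseteq> SP d" using dyadic_sub_SP[OF R] .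
  have "B \<in> sigma_sets (SP d) {{x \<in> SP d. x i \<in> A} |i A. i \<in> {..<d} \<and> A \<in> sets borel}"
    using B unfolding sets_eq sets_PiM_single by (simp add: space_PiM)
  then show ?thesis
  proof (induction rule: sigma_sets.induct)
    case (Basic a)
    then obtain i A where "a = {x \<in> SP d. x i \<in> A}" "i < d" "A \<in> sets borel" by auto
    then show ?case using coord_sigma[OF R] by simp
  next
    case Empty then show ?case by (simp add: sigma_sets.Empty)
  next
    case (Compl a)
    have "(SP d - a) \<inter> R = R - (a \<inter> R)" using RS by auto
    then show ?case using Compl.IH by (simp add: sigma_sets.Compl)
  next
    case (Union a)
    have e: "\<Union>(range a) \<inter> R = (\<Union>j. a j \<inter> R)" by auto
    have "(\<Union>j. a j \<inter> R) \<in> sigma_sets R (GR R)"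
      by (rule sigma_sets.Union) (rule Union.IH)
    then show ?case by (subst e)
  qed
qed

end


context czs begin

definition CU :: "(nat \<Rightarrow> real) set \<Rightarrow> (nat \<Rightarrow> real) set set" where
  "CU R = {\<Union>F | F. countable F \<and> F \<subseteq> GR R}"

definition AP :: "(nat \<Rightarrow> real) set \<Rightarrow> (nat \<Rightarrow> real) set \<Rightarrow> bool" where
  "AP R B \<longleftrightarrow> (\<forall>e>0. \<exists>U\<in>CU R. B \<subseteq> U \<and> emeasure M (U - B) \<le> ennreal e)"

lemma CU_sets: "U \<in> CU R \<Longrightarrow> U \<in> sets M"
proof -
  assume "U \<in> CU R"
  then obtain F where F: "U = \<Union>F" "countable F" "F \<subseteq> GR R" unfolding CU_def by blast
  show "U \<in> sets M" unfolding F(1) using F(2,3) GR_sets by (intro sets.countable_Union) auto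
qed

lemma CU_sub: "U \<in> CU R \<Longrightarrow> U \<subseteq> R"
  unfolding CU_def using GR_Pow by blast

lemma CU_single: "Q \<in> GR R \<Longrightarrow> Q \<in> CU R"
  unfolding CU_def by (intro CollectI exI[of _ "{Q}"]) auto

lemma CU_empty: "{} \<in> CU R"
  unfolding CU_def by (intro CollectI exI[of _ "{}"]) auto

lemma CU_R: "R \<in> dyadic d \<Longrightarrow> R \<in> CU R"
  by (rule CU_single) (simp add: GR_def)

lemma CU_Int: "U \<in> CU R \<Longrightarrow> V \<in> CU R \<Longrightarrow> U \<inter> V \<in> CU R"
proof -
  assume "U \<in> CU R" "V \<in> CU R"
  then obtain F F' where F: "U = \<Union>F" "countable F" "F \<subseteq> GR R"
    and F': "V = \<Union>F'" "countable F'" "F' \<subseteq> GR R" unfolding CU_def by blast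
  let ?H = "(\<lambda>(Q, Q'). Q \<inter> Q') ` (F \<times> F')"
  have "U \<inter> V = \<Union>?H" unfolding F(1) F'(1) by auto
  moreover have "countable ?H" using F(2) F'(2) by auto
  moreover have "?H \<subseteq> GR R"
  proof
    fix X assume "X \<in> ?H"
    then obtain Q Q' where X: "X = Q \<inter> Q'" "Q \<in> F" "Q' \<in> F'" by auto
    then show "X \<in> GR R" using GR_Int[of Q R Q'] F(3) F'(3) by blast
  qed
  ultimately show ?thesis unfolding CU_def by blast
qed

lemma CU_UN: "(\<And>i::nat. U i \<in> CU R) \<Longrightarrow> (\<Union>i. U i) \<in> CU R"
proof -
  assume "\<And>i::nat. U i \<in> CU R"
  then have "\<forall>i. \<exists>F. U i = \<Union>F \<and> countable F \<and> F \<subseteq> GR R" unfolding CU_def by blast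
  then obtain F where F: "\<And>i. U i = \<Union>(F i)" "\<And>i. countable (F i)" "\<And>i. F i \<subseteq> GR R"
    by metis
  have "(\<Union>i. U i) = \<Union>(\<Union>i. F i)" using F(1) by auto
  moreover have "countable (\<Union>i. F i)" using F(2) by auto
  moreover have "(\<Union>i. F i) \<subseteq> GR R" using F(3) by auto
  ultimately show ?thesis unfolding CU_def by blast
qed

lemma CU_compl:
  assumes R: "R \<in> dyadic d" and Q: "Q \<in> GR R"
  shows "R - Q \<in> CU R"
proof (cases "Q = {}")
  case True then show ?thesis using CU_R[OF R] by simp
next
  case False
  then have Qd: "Q \<in> dyadic d" and QR: "Q \<subseteq> R" using Q unfolding GR_def by auto
  obtain z where z: "z \<in> Q" using False by blast
  have zS: "z \<in> SP d" using z Qd dyadic_sub_SP by blast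
  obtain k where k: "Q = cub d k z" using dyadic_at[OF Qd z] by blast
  have zR: "z \<in> R" using z QR by blast
  obtain j where j: "R = cub d j z" using dyadic_at[OF R zR] by blast
  have jk: "j \<le> k" using cub_sub_gen[OF dpos zS, of k j] QR k j by simp
  let ?F = "{Q' \<in> dyadic d. Q' \<subseteq> R \<and> Q' \<inter> Q = {}}"
  have eq: "R - Q = \<Union>?F"
  proof
    show "\<Union>?F \<subseteq> R - Q" by blast
    show "R - Q \<subseteq> \<Union>?F"
    proof
      fix y assume y: "y \<in> R - Q"
      have yS: "y \<in> SP d" using y R dyadic_sub_SP by blast
      have Ry: "R = cub d j y" using j y cub_eq[of y d j z] by auto
      have "cub d k y \<subseteq> R" using Ry cub_mono[OF jk] by simp
      moreover have "cub d k y \<inter> Q = {}"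
      proof (rule ccontr)
        assume "cub d k y \<inter> Q \<noteq> {}"
        then obtain w where w: "w \<in> cub d k y" "w \<in> cub d k z" using k by blast
        have "cub d k w = cub d k y" "cub d k w = cub d k z" using cub_eq[OF w(1)] cub_eq[OF w(2)] by auto
        then have "y \<in> Q" using k cub_self[OF yS, of k] by simp
        then show False using y by blast
      qed
      ultimately have "cub d k y \<in> ?F" using cub_dyadic[OF yS] by blast
      then show "y \<in> \<Union>?F" using cub_self[OF yS, of k] by blast
    qed
  qed
  have "countable ?F" using countable_dyadic by (auto intro: countable_subset)
  moreover have "?F \<subseteq> GR R" unfolding GR_def by auto
  ultimately show ?thesis unfolding CU_def eq by blast
qed

lemma AP_CU: "B \<in> CU R \<Longrightarrow> AP R B"
  unfolding AP_def by (intro allI impI bexI[of _ B]) auto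

lemma geo_sum: "0 < e \<Longrightarrow> (\<Sum>i. ennreal (e / 2 ^ Suc i)) = ennreal e"
proof -
  assume e: "0 < e"
  have s0: "(\<lambda>n. e * (1/2::real) ^ Suc n) sums (e * 1)" by (intro sums_mult power_half_series)
  have fe: "(\<lambda>n. e * (1/2::real) ^ Suc n) = (\<lambda>n. e / 2 ^ Suc n)"
    by (rule ext) (simp only: power_one_over times_divide_eq_right mult_1_right)
  have s: "(\<lambda>n. e / 2 ^ Suc n) sums e" using s0 unfolding fe by simp
  have "(\<Sum>i. ennreal (e / 2 ^ Suc i)) = ennreal (\<Sum>i. e / 2 ^ Suc i)"
    using e s sums_summable[OF s] by (intro suminf_ennreal2) auto
  also have "(\<Sum>i. e / 2 ^ Suc i) = e" using s by (simp add: sums_iff)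
  finally show ?thesis .
qed

lemma AP_union:
  assumes A: "\<And>i::nat. AP R (A i)" "\<And>i. A i \<in> sets M"
  shows "AP R (\<Union>i. A i)"
  unfolding AP_def
proof (intro allI impI)
  fix e :: real assume e: "0 < e"
  have "\<forall>i. \<exists>U. U \<in> CU R \<and> A i \<subseteq> U \<and> emeasure M (U - A i) \<le> ennreal (e / 2 ^ Suc i)"
  proof
    fix i
    have pos: "0 < e / 2 ^ Suc i" using e by simp
    from A(1)[of i] pos obtain U where "U \<in> CU R" "A i \<subseteq> U" "emeasure M (U - A i) \<le> ennreal (e / 2 ^ Suc i)"
      unfolding AP_def by blast
    then show "\<exists>U. U \<in> CU R \<and> A i \<subseteq> U \<and> emeasure M (U - A i) \<le> ennreal (e / 2 ^ Suc i)" by blast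
  qed
  then obtain U where U: "\<And>i. U i \<in> CU R" "\<And>i. A i \<subseteq> U i" "\<And>i. emeasure M (U i - A i) \<le> ennreal (e / 2 ^ Suc i)"
    by metis
  have "(\<Union>i. U i) \<in> CU R" using U(1) by (rule CU_UN)
  moreover have "(\<Union>i. A i) \<subseteq> (\<Union>i. U i)" using U(2) by blast
  moreover have "emeasure M ((\<Union>i. U i) - (\<Union>i. A i)) \<le> ennreal e"
  proof -
    have "emeasure M ((\<Union>i. U i) - (\<Union>i. A i)) \<le> emeasure M (\<Union>i. U i - A i)"
      using U(1) A(2) CU_sets by (intro emeasure_mono) auto
    also have "\<dots> \<le> (\<Sum>i. emeasure M (U i - A i))"
      using U(1) A(2) CU_sets by (intro emeasure_subadditive_countably) auto
    also have "\<dots> \<le> (\<Sum>i. ennreal (e / 2 ^ Suc i))"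
      using U(3) by (intro suminf_le) auto
    also have "\<dots> = ennreal e" using geo_sum[OF e] .
    finally show ?thesis .
  qed
  ultimately show "\<exists>U\<in>CU R. (\<Union>i. A i) \<subseteq> U \<and> emeasure M (U - (\<Union>i. A i)) \<le> ennreal e" by blast
qed

lemma AP_compl_union:
  assumes R: "R \<in> dyadic d"
    and A: "\<And>i::nat. AP R (R - A i)" "\<And>i. A i \<in> sets M" "\<And>i. A i \<subseteq> R" "disjoint_family A"
  shows "AP R (R - (\<Union>i. A i))"
  unfolding AP_def
proof (intro allI impI)
  fix e :: real assume e: "0 < e"
  define T where "T N = (\<Union>i\<in>{N..}. A i)" for N
  have Tsets: "T N \<in> sets M" for N unfolding T_def using A(2) by auto
  have Tdec: "decseq T" unfolding decseq_def
  proof (intro allI impI)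
    fix m n :: nat assume "m \<le> n"
    then show "T n \<subseteq> T m" unfolding T_def by (intro UN_mono) auto
  qed
  have Rfin: "emeasure M R < \<infinity>" using dy_fin[OF R] .
  have Tfin: "emeasure M (T N) \<noteq> \<infinity>" for N
  proof -
    have "emeasure M (T N) \<le> emeasure M R" using Tsets A(3) dy_sets[OF R] unfolding T_def
      by (intro emeasure_mono) auto
    then show ?thesis using Rfin by (auto simp: top_unique)
  qed
  have Tint: "(\<Inter>N. T N) = {}"
  proof (rule ccontr)
    assume "(\<Inter>N. T N) \<noteq> {}"
    then obtain x where x: "\<And>N. x \<in> T N" by blast
    obtain i where i: "x \<in> A i" using x[of 0] unfolding T_def by auto
    obtain j where j: "j \<ge> Suc i" "x \<in> A j" using x[of "Suc i"] unfolding T_def by auto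
    have "A i \<inter> A j = {}" using A(4) j(1) unfolding disjoint_family_on_def by auto
    then show False using i j by blast
  qed
  have "(\<lambda>N. emeasure M (T N)) \<longlonglongrightarrow> emeasure M (\<Inter>N. T N)"
    using Tsets Tdec Tfin by (intro Lim_emeasure_decseq) auto
  then have "(\<lambda>N. emeasure M (T N)) \<longlonglongrightarrow> 0" using Tint by simp
  moreover have "(0::ennreal) < ennreal (e / 2)" using e by simp
  ultimately have "eventually (\<lambda>N. emeasure M (T N) < ennreal (e / 2)) sequentially"
    by (rule order_tendstoD(2))
  then obtain N where N: "emeasure M (T N) < ennreal (e / 2)"
    unfolding eventually_sequentially by blast
  define c where "c = e / (2 * (real N + 1))"
  have c: "0 < c" using e unfolding c_def by simp
  have "\<forall>i. \<exists>V. V \<in> CU R \<and> R - A i \<subseteq> V \<and> emeasure M (V - (R - A i)) \<le> ennreal c"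
  proof
    fix i
    from A(1)[of i] c obtain V where "V \<in> CU R" "R - A i \<subseteq> V" "emeasure M (V - (R - A i)) \<le> ennreal c"
      unfolding AP_def by blast
    then show "\<exists>V. V \<in> CU R \<and> R - A i \<subseteq> V \<and> emeasure M (V - (R - A i)) \<le> ennreal c" by blast
  qed
  then obtain V where V: "\<And>i. V i \<in> CU R" "\<And>i. R - A i \<subseteq> V i" "\<And>i. emeasure M (V i - (R - A i)) \<le> ennreal c"
    by metis
  define W where "W n = R \<inter> (\<Inter>i\<in>{..<n}. V i)" for n
  have WCU: "W n \<in> CU R" for n
  proof (induction n)
    case 0 then show ?case unfolding W_def using CU_R[OF R] by simp
  next
    case (Suc n)
    have "W (Suc n) = W n \<inter> V n" unfolding W_def by (auto simp: lessThan_Suc)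
    then show ?case using CU_Int[OF Suc.IH V(1)] by simp
  qed
  have sub: "R - (\<Union>i. A i) \<subseteq> W N" unfolding W_def using V(2) by blast
  have diff: "W N - (R - (\<Union>i. A i)) \<subseteq> (\<Union>i\<in>{..<N}. V i - (R - A i)) \<union> T N"
  proof
    fix x assume x: "x \<in> W N - (R - (\<Union>i. A i))"
    then have xR: "x \<in> R" and xV: "\<And>i. i < N \<Longrightarrow> x \<in> V i" unfolding W_def by auto
    obtain i where i: "x \<in> A i" using x xR by blast
    show "x \<in> (\<Union>i\<in>{..<N}. V i - (R - A i)) \<union> T N"
    proof (cases "i < N")
      case True then show ?thesis using xV[of i] i by blast
    next
      case False then show ?thesis using i unfolding T_def by auto
    qed
  qed
  have Vsets: "V i - (R - A i) \<in> sets M" for i using CU_sets[OF V(1)] A(2) dy_sets[OF R] by auto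
  have "emeasure M (W N - (R - (\<Union>i. A i))) \<le> emeasure M ((\<Union>i\<in>{..<N}. V i - (R - A i)) \<union> T N)"
    using diff Vsets Tsets by (intro emeasure_mono) auto
  also have "\<dots> \<le> emeasure M (\<Union>i\<in>{..<N}. V i - (R - A i)) + emeasure M (T N)"
    using Vsets Tsets by (intro emeasure_subadditive) auto
  also have "emeasure M (\<Union>i\<in>{..<N}. V i - (R - A i)) \<le> (\<Sum>i\<in>{..<N}. emeasure M (V i - (R - A i)))"
    using Vsets by (intro emeasure_subadditive_finite) auto
  also have "\<dots> \<le> (\<Sum>i\<in>{..<N}. ennreal c)" using V(3) by (intro sum_mono) auto
  also have "\<dots> = ennreal (real N * c)" using c by (simp add: ennreal_mult ennreal_of_nat_eq_real_of_nat)
  finally have "emeasure M (W N - (R - (\<Union>i. A i))) \<le> ennreal (real N * c) + emeasure M (T N)"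
    by (simp add: add_right_mono)
  also have "\<dots> \<le> ennreal (real N * c) + ennreal (e / 2)" using N by (intro add_left_mono) simp
  also have "\<dots> = ennreal (real N * c + e / 2)" using c e by (simp add: ennreal_plus)
  also have "\<dots> \<le> ennreal e"
  proof (intro ennreal_leI)
    have "real N * c = e / 2 * (real N / (real N + 1))" unfolding c_def by (simp add: field_simps)
    also have "\<dots> \<le> e / 2 * 1" using e by (intro mult_left_mono) auto
    finally show "real N * c + e / 2 \<le> e" by simp
  qed
  finally show "\<exists>U\<in>CU R. R - (\<Union>i. A i) \<subseteq> U \<and> emeasure M (U - (R - (\<Union>i. A i))) \<le> ennreal e"
    using WCU sub by blast
qed

lemma AP_sigma:
  assumes R: "R \<in> dyadic d" and B: "B \<in> sigma_sets R (GR R)"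
  shows "AP R B \<and> AP R (R - B)"
proof -
  have Ist: "Int_stable (GR R)" unfolding Int_stable_def using GR_Int by blast
  have Rs: "R \<in> sets M" using dy_sets[OF R] .
  from Ist GR_Pow B show ?thesis
  proof (induction rule: sigma_sets_induct_disjoint)
    case (basic A)
    then show ?case using AP_CU CU_single CU_compl[OF R] by blast
  next
    case empty
    then show ?case using AP_CU CU_empty CU_R[OF R] by simp
  next
    case (compl A)
    have "A \<subseteq> R" using sigma_sets_into_sp[OF GR_Pow compl.hyps] .
    then have "R - (R - A) = A" by blast
    then show ?case using compl.IH by simp
  next
    case (union A)
    have As: "\<And>i. A i \<in> sets M" using union.hyps(2) sigma_sub_sets[OF Rs] by blast
    have AR: "\<And>i. A i \<subseteq> R" using union.hyps(2) sigma_sets_into_sp[OF GR_Pow] by blast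
    show ?case
      using AP_union[of R A, OF _ As] AP_compl_union[OF R _ As AR union.hyps(1)] union.IH by blast
  qed
qed

lemma approx:
  assumes R: "R \<in> dyadic d" and B: "B \<in> sets M" "B \<subseteq> R"
  shows "AP R B"
proof -
  have "B \<inter> R \<in> sigma_sets R (GR R)" by (rule sets_in_sigma[OF R B(1)])
  then show ?thesis using AP_sigma[OF R] B(2) by (simp add: Int_absorb2)
qed

end


lemma infsum_disj_ind:
  assumes disj: "\<And>Q Q'. Q \<in> F \<Longrightarrow> Q' \<in> F \<Longrightarrow> Q \<noteq> Q' \<Longrightarrow> Q \<inter> Q' = {}"
  shows "(\<Sum>\<^sub>\<infinity>Q\<in>F. c * indicator Q x) = (c::ennreal) * indicator (\<Union>F) x"
proof (cases "\<exists>Q0\<in>F. x \<in> Q0")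
  case True
  then obtain Q0 where Q0: "Q0 \<in> F" "x \<in> Q0" by blast
  have "(\<Sum>\<^sub>\<infinity>Q\<in>F. c * indicator Q x) = (\<Sum>\<^sub>\<infinity>Q\<in>{Q0}. c * indicator Q x)"
  proof (rule infsum_cong_neutral)
    fix Q assume "Q \<in> F - {Q0}"
    then have "Q \<inter> Q0 = {}" using disj Q0(1) by blast
    then show "c * indicator Q x = 0" using Q0(2) by (auto simp: indicator_def)
  qed (use Q0 in auto)
  also have "\<dots> = c" using Q0 by simp
  finally show ?thesis using Q0 by (auto simp: indicator_def)
next
  case False
  then have "(\<Sum>\<^sub>\<infinity>Q\<in>F. c * indicator Q x) = 0" by (intro infsum_0) (auto simp: indicator_def)
  then show ?thesis using False by (auto simp: indicator_def)
qed

context czs begin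

lemma fmeas: "f \<in> borel_measurable M" using intf by (rule borel_measurable_integrable)

lemma nnJ: "Q \<in> sets M \<Longrightarrow> (\<integral>\<^sup>+x. ennreal \<bar>f x\<bar> * indicator Q x \<partial>M) = ennreal (J Q)"
proof -
  assume Q: "Q \<in> sets M"
  have "(\<integral>\<^sup>+x. ennreal \<bar>f x\<bar> * indicator Q x \<partial>M) = (\<integral>\<^sup>+x. ennreal (\<bar>f x\<bar> * indicator Q x) \<partial>M)"
    by (intro nn_integral_cong) (simp add: indicator_def)
  also have "\<dots> = ennreal (J Q)" unfolding J_def
    by (intro nn_integral_eq_integral int_absf_ind Q) auto
  finally show ?thesis .
qed

lemma J_le_of_avg:
  assumes Q: "Q \<in> dyadic d" and a: "avg M (\<lambda>y. \<bar>f y\<bar>) Q \<le> lam"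
  shows "J Q \<le> lam * measure M Q"
proof (cases "measure M Q = 0")
  case True
  have "emeasure M Q = 0" using True dy_emeasure[OF Q] by simp
  then have "Q \<in> null_sets M" using dy_sets[OF Q] by auto
  then have "AE x in M. x \<notin> Q" by (rule AE_not_in)
  then have "AE x in M. \<bar>f x\<bar> * indicator Q x = 0" by eventually_elim auto
  then have "J Q = 0" unfolding J_def by (rule integral_eq_zero_AE)
  then show ?thesis using True by simp
next
  case False
  then have p: "0 < measure M Q" using measure_nonneg[of M Q] by linarith
  then show ?thesis using a unfolding avg_absf by (simp add: pos_divide_le_eq mult.commute)
qed

lemma key_null:
  assumes R: "R \<in> dyadic d" and eta: "0 < \<eta>"
  shows "{x \<in> R - Omega d M f lam. lam + \<eta> \<le> \<bar>f x\<bar>} \<in> null_sets M"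
proof -
  let ?Om = "Omega d M f lam"
  define A where "A = {x \<in> R - ?Om. lam + \<eta> \<le> \<bar>f x\<bar>}"
  have RS: "R \<subseteq> space M" using dyadic_sub_SP[OF R] spaceM by simp
  have Rs: "R \<in> sets M" using dy_sets[OF R] .
  have Asets: "A \<in> sets M"
  proof -
    have "{x \<in> space M. lam + \<eta> \<le> \<bar>f x\<bar>} \<in> sets M" using fmeas by measurable
    moreover have "A = (R - ?Om) \<inter> {x \<in> space M. lam + \<eta> \<le> \<bar>f x\<bar>}" unfolding A_def using RS by auto
    ultimately show ?thesis using Rs Omega_sets by auto
  qed
  have AR: "A \<subseteq> R" unfolding A_def by auto
  have Afin: "emeasure M A = ennreal (measure M A)"
  proof -
    have "emeasure M A \<le> emeasure M R" using AR Rs by (intro emeasure_mono) auto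
    then have "emeasure M A < \<infinity>" using dy_fin[OF R] by auto
    then show ?thesis by (intro emeasure_eq_ennreal_measure) (simp add: less_top)
  qed
  have main: "(lam + \<eta>) * measure M A \<le> lam * (measure M A + e)" if e: "0 < e" for e
  proof -
    obtain U where U: "U \<in> CU R" "A \<subseteq> U" "emeasure M (U - A) \<le> ennreal e"
      using approx[OF R Asets AR] e unfolding AP_def by blast
    obtain F where F: "U = \<Union>F" "countable F" "F \<subseteq> GR R" using U(1) unfolding CU_def by blast
    define F1 where "F1 = {Q \<in> F. Q \<inter> A \<noteq> {}}"
    define F2 where "F2 = {Q \<in> F1. \<forall>Q'\<in>F1. Q \<subseteq> Q' \<longrightarrow> Q' = Q}"
    have F1d: "Q \<in> dyadic d" "Q \<subseteq> R" if "Q \<in> F1" for Q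
      using that F(3) unfolding F1_def GR_def by auto
    have F2sub: "F2 \<subseteq> F1" unfolding F2_def by blast
    have cover: "A \<subseteq> \<Union>F2"
    proof
      fix x assume xA: "x \<in> A"
      then obtain Q where Q: "Q \<in> F" "x \<in> Q" using U(2) F(1) by blast
      then have QF1: "Q \<in> F1" using xA unfolding F1_def by blast
      define S where "S = {Q' \<in> F1. Q \<subseteq> Q'}"
      have "S \<subseteq> {Q' \<in> dyadic d. Q \<subseteq> Q' \<and> Q' \<subseteq> R}" unfolding S_def using F1d by blast
      then have finS: "finite S" using sub_cubes_finite[OF dpos F1d(1)[OF QF1] R F1d(2)[OF QF1]]
        by (rule finite_subset)
      have neS: "S \<noteq> {}" unfolding S_def using QF1 by blast
      obtain m where m: "m \<in> S" "\<forall>b\<in>S. m \<le> b \<longrightarrow> m = b" using finite_has_maximal[OF finS neS] by blast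
      have "m \<in> F2"
        unfolding F2_def
      proof (intro CollectI conjI ballI impI)
        show "m \<in> F1" using m(1) unfolding S_def by blast
        fix Q' assume Q': "Q' \<in> F1" "m \<subseteq> Q'"
        then have "Q' \<in> S" using m(1) unfolding S_def by blast
        then show "Q' = m" using m(2) Q'(2) by auto
      qed
      moreover have "x \<in> m" using m(1) Q(2) unfolding S_def by blast
      ultimately show "x \<in> \<Union>F2" by blast
    qed
    have disj: "Q \<inter> Q' = {}" if "Q \<in> F2" "Q' \<in> F2" "Q \<noteq> Q'" for Q Q'
    proof (rule ccontr)
      assume "Q \<inter> Q' \<noteq> {}"
      then obtain z where "z \<in> Q" "z \<in> Q'" by blast
      moreover have "Q \<in> dyadic d" "Q' \<in> dyadic d" using that F2sub F1d by blast+
      ultimately have "Q \<subseteq> Q' \<or> Q' \<subseteq> Q" using nested_or_disjoint by blast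
      moreover have "Q \<in> F1" "Q' \<in> F1" using that F2sub by blast+
      ultimately show False using that unfolding F2_def by blast
    qed
    have F2J: "J Q \<le> lam * measure M Q" if Q: "Q \<in> F2" for Q
    proof -
      have QF1: "Q \<in> F1" using Q F2sub by blast
      then obtain y where y: "y \<in> Q" "y \<in> A" unfolding F1_def by blast
      have "y \<in> space M" "y \<notin> ?Om" using y(2) RS unfolding A_def by auto
      then have "avg M (\<lambda>y. \<bar>f y\<bar>) Q \<le> lam" using notOmega F1d(1)[OF QF1] y(1) by blast
      then show ?thesis using J_le_of_avg F1d(1)[OF QF1] by blast
    qed
    have F2c: "countable F2" using F(2) F2sub unfolding F1_def by (auto intro: countable_subset)
    have F2s: "Q \<in> sets M" if "Q \<in> F2" for Q using that F2sub F1d dy_sets by blast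
    have UF2: "\<Union>F2 \<subseteq> U" using F(1) F2sub unfolding F1_def by blast
    have UF2s: "\<Union>F2 \<in> sets M" using F2c F2s by (intro sets.countable_Union) auto
    have Us: "U \<in> sets M" using CU_sets[OF U(1)] .
    have "ennreal (lam + \<eta>) * emeasure M A = (\<integral>\<^sup>+x. ennreal (lam + \<eta>) * indicator A x \<partial>M)"
      using Asets by (rule nn_integral_cmult_indicator[symmetric])
    also have "\<dots> \<le> (\<integral>\<^sup>+x. ennreal \<bar>f x\<bar> * indicator (\<Union>F2) x \<partial>M)"
    proof (intro nn_integral_mono)
      fix x show "ennreal (lam + \<eta>) * indicator A x \<le> ennreal \<bar>f x\<bar> * indicator (\<Union>F2) x"
      proof (cases "x \<in> A")
        case True
        then have "x \<in> \<Union>F2" "lam + \<eta> \<le> \<bar>f x\<bar>" using cover unfolding A_def by auto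
        then show ?thesis using True by (simp add: ennreal_leI)
      qed simp
    qed
    also have "\<dots> = (\<integral>\<^sup>+x. (\<Sum>\<^sub>\<infinity>Q\<in>F2. ennreal \<bar>f x\<bar> * indicator Q x) \<partial>M)"
      using infsum_disj_ind[OF disj] by simp
    also have "\<dots> = (\<Sum>\<^sub>\<infinity>Q\<in>F2. \<integral>\<^sup>+x. ennreal \<bar>f x\<bar> * indicator Q x \<partial>M)"
      using F2c F2s fmeas by (intro nn_integral_infsum) auto
    also have "\<dots> \<le> (\<Sum>\<^sub>\<infinity>Q\<in>F2. \<integral>\<^sup>+x. ennreal lam * indicator Q x \<partial>M)"
    proof (intro infsum_mono)
      fix Q assume Q: "Q \<in> F2"
      have "(\<integral>\<^sup>+x. ennreal \<bar>f x\<bar> * indicator Q x \<partial>M) = ennreal (J Q)" using nnJ F2s[OF Q] by simp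
      also have "\<dots> \<le> ennreal (lam * measure M Q)" using F2J[OF Q] by (rule ennreal_leI)
      also have "\<dots> = ennreal lam * emeasure M Q"
        using dy_emeasure[OF F1d(1)[OF subsetD[OF F2sub Q]]] lam by (simp add: ennreal_mult)
      also have "\<dots> = (\<integral>\<^sup>+x. ennreal lam * indicator Q x \<partial>M)" using F2s[OF Q] by (rule nn_integral_cmult_indicator[symmetric])
      finally show "(\<integral>\<^sup>+x. ennreal \<bar>f x\<bar> * indicator Q x \<partial>M) \<le> (\<integral>\<^sup>+x. ennreal lam * indicator Q x \<partial>M)" .
    qed (auto intro: nonneg_summable_on_complete)
    also have "\<dots> = (\<integral>\<^sup>+x. (\<Sum>\<^sub>\<infinity>Q\<in>F2. ennreal lam * indicator Q x) \<partial>M)"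
      using F2c F2s by (intro nn_integral_infsum[symmetric]) auto
    also have "\<dots> = (\<integral>\<^sup>+x. ennreal lam * indicator (\<Union>F2) x \<partial>M)"
      using infsum_disj_ind[OF disj] by simp
    also have "\<dots> = ennreal lam * emeasure M (\<Union>F2)" using UF2s by (rule nn_integral_cmult_indicator)
    also have "\<dots> \<le> ennreal lam * emeasure M U" using UF2 UF2s Us by (intro mult_left_mono emeasure_mono) auto
    also have "emeasure M U \<le> emeasure M A + emeasure M (U - A)"
    proof -
      have "U = A \<union> (U - A)" using U(2) by blast
      then have "emeasure M U = emeasure M (A \<union> (U - A))" by simp
      also have "\<dots> \<le> emeasure M A + emeasure M (U - A)" using Asets Us by (intro emeasure_subadditive) auto
      finally show ?thesis .
    qed
    also have "emeasure M A + emeasure M (U - A) \<le> ennreal (measure M A) + ennreal e"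
      using Afin U(3) by (intro add_mono) auto
    finally have "ennreal (lam + \<eta>) * emeasure M A \<le> ennreal lam * (ennreal (measure M A) + ennreal e)"
      by (simp add: mult_left_mono)
    then have "ennreal ((lam + \<eta>) * measure M A) \<le> ennreal (lam * (measure M A + e))"
      using Afin lam eta e by (simp add: ennreal_mult ennreal_plus)
    then show ?thesis using lam e by (simp add: ennreal_le_iff)
  qed
  have "measure M A = 0"
  proof (rule ccontr)
    assume ne: "measure M A \<noteq> 0"
    then have pa: "0 < measure M A" using measure_nonneg[of M A] by linarith
    define e where "e = \<eta> * measure M A / (2 * lam)"
    have e: "0 < e" unfolding e_def using pa eta lam by simp
    have "(lam + \<eta>) * measure M A \<le> lam * (measure M A + e)" by (rule main[OF e])
    moreover have "lam * e = \<eta> * measure M A / 2" unfolding e_def using lam by simp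
    ultimately have "\<eta> * measure M A \<le> \<eta> * measure M A / 2" by (simp add: algebra_simps)
    then show False using pa eta by simp
  qed
  then have "emeasure M A = 0" using Afin by simp
  then show ?thesis using Asets unfolding A_def by auto
qed

lemma diff_AE: "AE x in M. x \<in> space M - Omega d M f lam \<longrightarrow> \<bar>f x\<bar> \<le> lam"
proof (rule AE_I')
  let ?N = "\<Union>R\<in>dyadic d. \<Union>j. {x \<in> R - Omega d M f lam. lam + 1 / real (Suc j) \<le> \<bar>f x\<bar>}"
  show "?N \<in> null_sets M"
  proof (intro null_sets_UN' countable_dyadic null_sets_UN countableI_type)
    fix R j assume "R \<in> dyadic d"
    then show "{x \<in> R - Omega d M f lam. lam + 1 / real (Suc j) \<le> \<bar>f x\<bar>} \<in> null_sets M"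
      by (intro key_null) auto
  qed
  show "{x \<in> space M. \<not> (x \<in> space M - Omega d M f lam \<longrightarrow> \<bar>f x\<bar> \<le> lam)} \<subseteq> ?N"
  proof
    fix x assume x: "x \<in> {x \<in> space M. \<not> (x \<in> space M - Omega d M f lam \<longrightarrow> \<bar>f x\<bar> \<le> lam)}"
    then have xs: "x \<in> space M" and xO: "x \<notin> Omega d M f lam" and fx: "lam < \<bar>f x\<bar>" by auto
    have xS: "x \<in> SP d" using xs spaceM by simp
    obtain j where j: "inverse (real (Suc j)) < \<bar>f x\<bar> - lam" using reals_Archimedean[of "\<bar>f x\<bar> - lam"] fx by auto
    have "lam + 1 / real (Suc j) \<le> \<bar>f x\<bar>" using j by (simp add: inverse_eq_divide)
    moreover have "x \<in> cub d 0 x" using cub_self[OF xS] .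
    moreover have "cub d 0 x \<in> dyadic d" using cub_dyadic[OF xS] .
    ultimately show "x \<in> ?N" using xO by blast
  qed
qed

end


lemma SUP_mult_diag:
  fixes u v :: "nat \<Rightarrow> ennreal"
  assumes "incseq u" "incseq v"
  shows "(SUP k. u k) * (SUP j. v j) = (SUP n. u n * v n)"
proof -
  have "(SUP k. u k) * (SUP j. v j) = (SUP k. u k * (SUP j. v j))" by (rule SUP_mult_right_ennreal)
  also have "\<dots> = (SUP k. SUP j. u k * v j)" by (simp add: SUP_mult_left_ennreal)
  also have "\<dots> = (SUP n. u n * v n)"
  proof (rule antisym)
    show "(SUP k. SUP j. u k * v j) \<le> (SUP n. u n * v n)"
    proof (intro SUP_least)
      fix k j
      have "u k * v j \<le> u (max k j) * v (max k j)"
        using assms by (intro mult_mono) (auto simp: incseq_def)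
      also have "\<dots> \<le> (SUP n. u n * v n)" by (rule SUP_upper) simp
      finally show "u k * v j \<le> (SUP n. u n * v n)" .
    qed
    show "(SUP n. u n * v n) \<le> (SUP k. SUP j. u k * v j)"
    proof (intro SUP_least)
      fix n
      have "u n * v n \<le> (SUP j. u n * v j)" by (rule SUP_upper) simp
      also have "\<dots> \<le> (SUP k. SUP j. u k * v j)" by (rule SUP_upper) simp
      finally show "u n * v n \<le> (SUP k. SUP j. u k * v j)" .
    qed
  qed
  finally show ?thesis .
qed

lemma SUP_power_incseq:
  fixes u :: "nat \<Rightarrow> ennreal"
  assumes inc: "incseq u"
  shows "(SUP k. u k) ^ m = (SUP k. u k ^ m)"
proof (induction m)
  case 0 then show ?case by simp
next
  case (Suc m)
  have inc2: "incseq (\<lambda>k. u k ^ m)" using inc by (auto simp: incseq_def intro: power_mono)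
  have "(SUP k. u k) ^ Suc m = (SUP k. u k) * (SUP k. u k ^ m)" using Suc by simp
  also have "\<dots> = (SUP k. u k * u k ^ m)" by (rule SUP_mult_diag[OF inc inc2])
  finally show ?case by simp
qed

lemma fs: "(of_nat (Suc n) * of_nat (fact n) :: ennreal) = of_nat (fact (Suc n))"
  unfolding fact_Suc of_nat_mult by simp

context czs begin

abbreviation par where "par Q \<equiv> dparent d Q"

definition tQ :: "(nat \<Rightarrow> real) set \<Rightarrow> real" where
  "tQ Q = (avg M f Q - avg M f (par Q)) * (measure M Q / measure M (par Q))"

definition aQ :: "(nat \<Rightarrow> real) set \<Rightarrow> ennreal" where
  "aQ Q = ennreal \<bar>tQ Q\<bar>"

definition SG :: "(nat \<Rightarrow> real) set set \<Rightarrow> (nat \<Rightarrow> real) \<Rightarrow> ennreal" where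
  "SG G x = (\<Sum>Q\<in>G. aQ Q * indicator (par Q) x)"

definition down :: "(nat \<Rightarrow> real) set set \<Rightarrow> (nat \<Rightarrow> real) set \<Rightarrow> (nat \<Rightarrow> real) set set" where
  "down G R = {Q\<in>G. par Q \<subseteq> R}"

lemma MC_countable: "countable MC"
  using countable_dyadic mc_dy by (auto intro: countable_subset)

lemma aQ_bound: "Q \<in> MC \<Longrightarrow> aQ Q * emeasure M (par Q) \<le> ennreal (2 * J Q)"
proof -
  assume Q: "Q \<in> MC"
  have pp: "0 < measure M (par Q)" using mc_par_pos[OF Q] .
  have "aQ Q * emeasure M (par Q) = ennreal (\<bar>tQ Q\<bar> * measure M (par Q))"
    unfolding aQ_def using dy_emeasure[OF mc_par_dy[OF Q]] by (simp add: ennreal_mult)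
  also have "\<bar>tQ Q\<bar> * measure M (par Q) = \<bar>avg M f Q - avg M f (par Q)\<bar> * measure M Q"
    unfolding tQ_def using pp by (simp add: abs_mult)
  also have "ennreal (\<bar>avg M f Q - avg M f (par Q)\<bar> * measure M Q) \<le> ennreal (2 * J Q)"
    using key_c[OF Q] by (rule ennreal_leI)
  finally show ?thesis .
qed

lemma sum_J_le_R:
  assumes G: "finite G" "G \<subseteq> MC" and R: "R \<in> sets M" and sub: "\<And>Q. Q \<in> G \<Longrightarrow> Q \<subseteq> R"
  shows "(\<Sum>Q\<in>G. J Q) \<le> J R"
proof -
  have "(\<integral>x. (\<Sum>Q\<in>G. \<bar>f x\<bar> * indicator Q x) \<partial>M) = (\<Sum>Q\<in>G. \<integral>x. \<bar>f x\<bar> * indicator Q x \<partial>M)"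
    using G mc_sets by (intro Bochner_Integration.integral_sum int_absf_ind) auto
  then have "(\<Sum>Q\<in>G. J Q) = (\<integral>x. (\<Sum>Q\<in>G. \<bar>f x\<bar> * indicator Q x) \<partial>M)"
    unfolding J_def by simp
  also have "\<dots> \<le> J R"
    unfolding J_def
  proof (intro integral_mono int_absf_ind R)
    show "integrable M (\<lambda>x. \<Sum>Q\<in>G. \<bar>f x\<bar> * indicator Q x)"
      using G mc_sets by (intro Bochner_Integration.integrable_sum int_absf_ind) auto
    fix x
    have "(\<Sum>Q\<in>G. \<bar>f x\<bar> * indicator Q x) = \<bar>f x\<bar> * (\<Sum>Q\<in>G. indicator Q x)"
      by (simp add: sum_distrib_left)
    also have "\<dots> \<le> \<bar>f x\<bar> * indicator R x"
    proof (cases "x \<in> R")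
      case True
      have "(\<Sum>Q\<in>G. indicator Q x) \<le> (1::real)"
        using sum_ind_disj[OF G(1)] mc_disj G(2) by (auto simp: subset_iff)
      then show ?thesis using True by (intro mult_left_mono) auto
    next
      case False
      then have "(\<Sum>Q\<in>G. indicator Q x) = (0::real)" using sub by (intro sum.neutral) (auto simp: indicator_def)
      then show ?thesis by simp
    qed
    finally show "(\<Sum>Q\<in>G. \<bar>f x\<bar> * indicator Q x) \<le> \<bar>f x\<bar> * indicator R x" .
  qed
  finally show ?thesis .
qed

lemma carleson:
  assumes G: "finite G" "G \<subseteq> MC" and R: "R \<in> dyadic d"
  shows "(\<Sum>Q\<in>down G R. aQ Q * emeasure M (par Q)) \<le> ennreal (2 * lam) * emeasure M R"
proof (cases "down G R = {}")
  case True then show ?thesis by simp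
next
  case False
  then obtain Q0 where Q0: "Q0 \<in> G" "par Q0 \<subseteq> R" unfolding down_def by blast
  have Q0MC: "Q0 \<in> MC" using Q0 G by blast
  have "Q0 \<subset> R" using mc_sub_par[OF Q0MC] Q0(2) by blast
  then have "avg M (\<lambda>y. \<bar>f y\<bar>) R \<le> lam" using Q0MC R unfolding mc_iff by blast
  then have JR: "J R \<le> lam * measure M R" using J_le_of_avg[OF R] by simp
  have dG: "finite (down G R)" "down G R \<subseteq> MC" using G unfolding down_def by auto
  have sub: "\<And>Q. Q \<in> down G R \<Longrightarrow> Q \<subseteq> R"
    unfolding down_def using mc_sub_par G by blast
  have "(\<Sum>Q\<in>down G R. aQ Q * emeasure M (par Q)) \<le> (\<Sum>Q\<in>down G R. ennreal (2 * J Q))"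
    using dG aQ_bound by (intro sum_mono) auto
  also have "\<dots> = ennreal (2 * (\<Sum>Q\<in>down G R. J Q))"
    using J_nonneg by (simp add: sum_ennreal sum_distrib_left)
  also have "\<dots> \<le> ennreal (2 * J R)"
    using sum_J_le_R[OF dG dy_sets[OF R] sub] by (intro ennreal_leI) simp
  also have "\<dots> \<le> ennreal (2 * (lam * measure M R))" using JR by (intro ennreal_leI) simp
  also have "\<dots> = ennreal (2 * lam) * emeasure M R"
    using dy_emeasure[OF R] lam by (simp add: ennreal_mult mult.assoc)
  finally show ?thesis .
qed

lemma global_sum:
  assumes G: "finite G" "G \<subseteq> MC"
  shows "(\<Sum>Q\<in>G. aQ Q * emeasure M (par Q)) \<le> ennreal 2 * (\<integral>\<^sup>+x. ennreal \<bar>f x\<bar> \<partial>M)"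
proof -
  have "(\<Sum>Q\<in>G. aQ Q * emeasure M (par Q)) \<le> (\<Sum>Q\<in>G. ennreal (2 * J Q))"
    using G aQ_bound by (intro sum_mono) auto
  also have "\<dots> = ennreal (2 * (\<Sum>Q\<in>G. J Q))"
    using J_nonneg by (simp add: sum_ennreal sum_distrib_left)
  also have "\<dots> \<le> ennreal (2 * (\<integral>x. \<bar>f x\<bar> \<partial>M))"
    using sum_J_le[OF G] by (intro ennreal_leI) simp
  also have "\<dots> = ennreal 2 * (\<integral>\<^sup>+x. ennreal \<bar>f x\<bar> \<partial>M)"
    unfolding nn_f by (simp add: ennreal_mult)
  finally show ?thesis .
qed

lemma SG_meas: "finite G \<Longrightarrow> G \<subseteq> MC \<Longrightarrow> SG G \<in> borel_measurable M"
proof -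
  assume G: "finite G" "G \<subseteq> MC"
  have "(\<lambda>x. \<Sum>Q\<in>G. aQ Q * indicator (par Q) x) \<in> borel_measurable M"
    using G dy_sets mc_par_dy by (intro borel_measurable_sum borel_measurable_times_ennreal) auto
  then show ?thesis unfolding SG_def[abs_def] .
qed

lemma SG_pow:
  assumes G: "finite G" "G \<subseteq> MC"
  shows "SG G x ^ Suc n \<le> of_nat (Suc n) * (\<Sum>Q\<in>G. aQ Q * (indicator (par Q) x * SG (down G (par Q)) x ^ n))"
proof -
  define T where "T = {Q\<in>G. x \<in> par Q}"
  define r where "r Q Q' \<longleftrightarrow> par Q' \<subseteq> par Q" for Q Q'
  have finT: "finite T" using G(1) unfolding T_def by simp
  have tot: "\<forall>t\<in>T. \<forall>s\<in>T. r t s \<or> r s t"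
  proof (intro ballI)
    fix t s assume "t \<in> T" "s \<in> T"
    then have "x \<in> par t" "x \<in> par s" "par t \<in> dyadic d" "par s \<in> dyadic d"
      using G mc_par_dy unfolding T_def by auto
    then show "r t s \<or> r s t" unfolding r_def using nested_or_disjoint by blast
  qed
  have tr: "\<forall>t\<in>T. \<forall>s\<in>T. \<forall>u\<in>T. r t s \<longrightarrow> r s u \<longrightarrow> r t u" unfolding r_def by blast
  have e1: "SG G x = (\<Sum>Q\<in>T. aQ Q)"
  proof -
    have "SG G x = (\<Sum>Q\<in>G. if x \<in> par Q then aQ Q else 0)"
      unfolding SG_def by (intro sum.cong) (auto simp: indicator_def)
    also have "\<dots> = (\<Sum>Q\<in>T. aQ Q)" unfolding T_def using G(1) by (simp add: sum.inter_filter)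
    finally show ?thesis .
  qed
  have e2: "(\<Sum>s\<in>{s\<in>T. r t s}. aQ s) = SG (down G (par t)) x" for t
  proof -
    have "SG (down G (par t)) x = (\<Sum>Q\<in>down G (par t). if x \<in> par Q then aQ Q else 0)"
      unfolding SG_def by (intro sum.cong) (auto simp: indicator_def)
    also have "\<dots> = (\<Sum>Q\<in>{Q \<in> down G (par t). x \<in> par Q}. aQ Q)"
    proof -
      have fin: "finite (down G (par t))" using G(1) unfolding down_def by simp
      show ?thesis by (rule sum.inter_filter[symmetric, OF fin])
    qed
    also have "{Q \<in> down G (par t). x \<in> par Q} = {s\<in>T. r t s}"
      unfolding down_def T_def r_def by auto
    finally show ?thesis by simp
  qed
  have e3: "(\<Sum>Q\<in>G. aQ Q * (indicator (par Q) x * SG (down G (par Q)) x ^ n))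
      = (\<Sum>t\<in>T. aQ t * (\<Sum>s\<in>{s\<in>T. r t s}. aQ s) ^ n)"
  proof -
    have "(\<Sum>Q\<in>G. aQ Q * (indicator (par Q) x * SG (down G (par Q)) x ^ n))
        = (\<Sum>Q\<in>G. if x \<in> par Q then aQ Q * SG (down G (par Q)) x ^ n else 0)"
      by (intro sum.cong) (auto simp: indicator_def)
    also have "\<dots> = (\<Sum>Q\<in>T. aQ Q * SG (down G (par Q)) x ^ n)"
      unfolding T_def using G(1) by (simp add: sum.inter_filter)
    also have "\<dots> = (\<Sum>t\<in>T. aQ t * (\<Sum>s\<in>{s\<in>T. r t s}. aQ s) ^ n)" using e2 by simp
    finally show ?thesis .
  qed
  show ?thesis unfolding e1 e3 by (rule chain_pow[OF finT tot tr])
qed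

lemma down_down: "par Q \<subseteq> R \<Longrightarrow> down (down G R) (par Q) = down G (par Q)"
  unfolding down_def by auto

lemma down_sub: "down G R \<subseteq> G" unfolding down_def by auto

lemma SG_int_R:
  assumes G: "finite G" "G \<subseteq> MC" and R: "R \<in> dyadic d"
  shows "(\<integral>\<^sup>+x. indicator R x * SG (down G R) x ^ n \<partial>M) \<le> of_nat (fact n) * ennreal (2 * lam) ^ n * emeasure M R"
  using R
proof (induction n arbitrary: R)
  case 0
  then show ?case using dy_sets[OF 0] by simp
next
  case (Suc n)
  let ?G' = "down G R"
  have G': "finite ?G'" "?G' \<subseteq> MC" using G down_sub[of G R] by (auto intro: finite_subset)
  have parsub: "par Q \<subseteq> R" if "Q \<in> ?G'" for Q using that unfolding down_def by auto
  have pard: "par Q \<in> dyadic d" if "Q \<in> ?G'" for Q using that G' mc_par_dy by blast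
  have mG: "SG (down G (par Q)) \<in> borel_measurable M" if "Q \<in> ?G'" for Q
    using G down_sub[of G "par Q"] by (intro SG_meas) (auto intro: finite_subset)
  have "(\<integral>\<^sup>+x. indicator R x * SG ?G' x ^ Suc n \<partial>M)
      \<le> (\<integral>\<^sup>+x. of_nat (Suc n) * (\<Sum>Q\<in>?G'. aQ Q * (indicator (par Q) x * SG (down G (par Q)) x ^ n)) \<partial>M)"
  proof (intro nn_integral_mono)
    fix x
    have "indicator R x * SG ?G' x ^ Suc n \<le> SG ?G' x ^ Suc n"
      by (auto simp: indicator_def)
    also have "\<dots> \<le> of_nat (Suc n) * (\<Sum>Q\<in>?G'. aQ Q * (indicator (par Q) x * SG (down ?G' (par Q)) x ^ n))"
      by (rule SG_pow[OF G'])
    also have "\<dots> = of_nat (Suc n) * (\<Sum>Q\<in>?G'. aQ Q * (indicator (par Q) x * SG (down G (par Q)) x ^ n))"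
      using parsub down_down by (intro arg_cong[where f="\<lambda>s. of_nat (Suc n) * s"] sum.cong) auto
    finally show "indicator R x * SG ?G' x ^ Suc n
        \<le> of_nat (Suc n) * (\<Sum>Q\<in>?G'. aQ Q * (indicator (par Q) x * SG (down G (par Q)) x ^ n))" .
  qed
  also have "\<dots> = of_nat (Suc n) * (\<Sum>Q\<in>?G'. aQ Q * (\<integral>\<^sup>+x. indicator (par Q) x * SG (down G (par Q)) x ^ n \<partial>M))"
  proof -
    have "(\<integral>\<^sup>+x. of_nat (Suc n) * (\<Sum>Q\<in>?G'. aQ Q * (indicator (par Q) x * SG (down G (par Q)) x ^ n)) \<partial>M)
        = of_nat (Suc n) * (\<integral>\<^sup>+x. (\<Sum>Q\<in>?G'. aQ Q * (indicator (par Q) x * SG (down G (par Q)) x ^ n)) \<partial>M)"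
      using pard mG dy_sets by (intro nn_integral_cmult borel_measurable_sum borel_measurable_times_ennreal borel_measurable_power_ennreal) auto
    also have "(\<integral>\<^sup>+x. (\<Sum>Q\<in>?G'. aQ Q * (indicator (par Q) x * SG (down G (par Q)) x ^ n)) \<partial>M)
        = (\<Sum>Q\<in>?G'. (\<integral>\<^sup>+x. aQ Q * (indicator (par Q) x * SG (down G (par Q)) x ^ n) \<partial>M))"
      using pard mG dy_sets by (intro nn_integral_sum borel_measurable_times_ennreal borel_measurable_power_ennreal) auto
    also have "\<dots> = (\<Sum>Q\<in>?G'. aQ Q * (\<integral>\<^sup>+x. indicator (par Q) x * SG (down G (par Q)) x ^ n \<partial>M))"
      using pard mG dy_sets by (intro sum.cong nn_integral_cmult borel_measurable_times_ennreal borel_measurable_power_ennreal) auto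
    finally show ?thesis by simp
  qed
  also have "\<dots> \<le> of_nat (Suc n) * (\<Sum>Q\<in>?G'. aQ Q * (of_nat (fact n) * ennreal (2 * lam) ^ n * emeasure M (par Q)))"
    using pard Suc.IH by (intro mult_left_mono sum_mono) auto
  also have "\<dots> = of_nat (Suc n) * (of_nat (fact n) * ennreal (2 * lam) ^ n) * (\<Sum>Q\<in>?G'. aQ Q * emeasure M (par Q))"
    by (simp add: sum_distrib_left mult.assoc mult.left_commute)
  also have "\<dots> \<le> of_nat (Suc n) * (of_nat (fact n) * ennreal (2 * lam) ^ n) * (ennreal (2 * lam) * emeasure M R)"
    by (intro mult_left_mono carleson[OF G Suc.prems]) auto
  also have "\<dots> = of_nat (fact (Suc n)) * ennreal (2 * lam) ^ Suc n * emeasure M R"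
    by (simp only: fs[symmetric] power_Suc mult_ac)
  finally show ?case .
qed

lemma SG_int:
  assumes G: "finite G" "G \<subseteq> MC"
  shows "(\<integral>\<^sup>+x. SG G x ^ Suc n \<partial>M) \<le> of_nat (fact (Suc n)) * ennreal (2 * lam) ^ n * (ennreal 2 * (\<integral>\<^sup>+x. ennreal \<bar>f x\<bar> \<partial>M))"
proof -
  have pard: "par Q \<in> dyadic d" if "Q \<in> G" for Q using that G mc_par_dy by blast
  have mG: "SG (down G (par Q)) \<in> borel_measurable M" if "Q \<in> G" for Q
    using G down_sub[of G "par Q"] by (intro SG_meas) (auto intro: finite_subset)
  have "(\<integral>\<^sup>+x. SG G x ^ Suc n \<partial>M)
      \<le> (\<integral>\<^sup>+x. of_nat (Suc n) * (\<Sum>Q\<in>G. aQ Q * (indicator (par Q) x * SG (down G (par Q)) x ^ n)) \<partial>M)"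
    by (intro nn_integral_mono SG_pow[OF G])
  also have "\<dots> = of_nat (Suc n) * (\<Sum>Q\<in>G. aQ Q * (\<integral>\<^sup>+x. indicator (par Q) x * SG (down G (par Q)) x ^ n \<partial>M))"
  proof -
    have "(\<integral>\<^sup>+x. of_nat (Suc n) * (\<Sum>Q\<in>G. aQ Q * (indicator (par Q) x * SG (down G (par Q)) x ^ n)) \<partial>M)
        = of_nat (Suc n) * (\<integral>\<^sup>+x. (\<Sum>Q\<in>G. aQ Q * (indicator (par Q) x * SG (down G (par Q)) x ^ n)) \<partial>M)"
      using pard mG dy_sets by (intro nn_integral_cmult borel_measurable_sum borel_measurable_times_ennreal borel_measurable_power_ennreal) auto
    also have "(\<integral>\<^sup>+x. (\<Sum>Q\<in>G. aQ Q * (indicator (par Q) x * SG (down G (par Q)) x ^ n)) \<partial>M)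
        = (\<Sum>Q\<in>G. (\<integral>\<^sup>+x. aQ Q * (indicator (par Q) x * SG (down G (par Q)) x ^ n) \<partial>M))"
      using pard mG dy_sets by (intro nn_integral_sum borel_measurable_times_ennreal borel_measurable_power_ennreal) auto
    also have "\<dots> = (\<Sum>Q\<in>G. aQ Q * (\<integral>\<^sup>+x. indicator (par Q) x * SG (down G (par Q)) x ^ n \<partial>M))"
      using pard mG dy_sets by (intro sum.cong nn_integral_cmult borel_measurable_times_ennreal borel_measurable_power_ennreal) auto
    finally show ?thesis by simp
  qed
  also have "\<dots> \<le> of_nat (Suc n) * (\<Sum>Q\<in>G. aQ Q * (of_nat (fact n) * ennreal (2 * lam) ^ n * emeasure M (par Q)))"
    using pard SG_int_R[OF G] by (intro mult_left_mono sum_mono) auto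
  also have "\<dots> = of_nat (Suc n) * (of_nat (fact n) * ennreal (2 * lam) ^ n) * (\<Sum>Q\<in>G. aQ Q * emeasure M (par Q))"
    by (simp add: sum_distrib_left mult.assoc mult.left_commute)
  also have "\<dots> \<le> of_nat (Suc n) * (of_nat (fact n) * ennreal (2 * lam) ^ n) * (ennreal 2 * (\<integral>\<^sup>+x. ennreal \<bar>f x\<bar> \<partial>M))"
    by (intro mult_left_mono global_sum[OF G]) auto
  also have "\<dots> = of_nat (fact (Suc n)) * ennreal (2 * lam) ^ n * (ennreal 2 * (\<integral>\<^sup>+x. ennreal \<bar>f x\<bar> \<partial>M))"
    by (simp only: fs[symmetric] mult_ac)
  finally show ?thesis .
qed

definition Sfull :: "(nat \<Rightarrow> real) \<Rightarrow> ennreal" where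
  "Sfull x = (\<Sum>\<^sub>\<infinity>Q\<in>MC. aQ Q * indicator (par Q) x)"

lemma Sfull_props:
  shows "Sfull \<in> borel_measurable M"
    and "(\<integral>\<^sup>+x. Sfull x ^ Suc n \<partial>M) \<le> of_nat (fact (Suc n)) * ennreal (2 * lam) ^ n * (ennreal 2 * (\<integral>\<^sup>+x. ennreal \<bar>f x\<bar> \<partial>M))"
proof -
  obtain F where F: "\<And>k. finite (F k)" "\<And>k. F k \<subseteq> MC" "incseq F"
    "\<And>g :: _ \<Rightarrow> ennreal. (\<Sum>\<^sub>\<infinity>i\<in>MC. g i) = (SUP k. sum g (F k))"
    using infsum_seq[OF MC_countable] by metis
  have eq: "Sfull x = (SUP k. SG (F k) x)" for x unfolding Sfull_def SG_def F(4) ..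
  have inc: "incseq (\<lambda>k. SG (F k) x)" for x
    unfolding SG_def using F(1,3) by (auto simp: incseq_def intro!: sum_mono2)
  show "Sfull \<in> borel_measurable M"
    unfolding eq[abs_def] using SG_meas F(1,2) by (intro borel_measurable_SUP) auto
  have inc2: "incseq (\<lambda>k x. SG (F k) x ^ Suc n)"
    unfolding incseq_def
  proof (intro allI impI le_funI)
    fix m k x assume "(m::nat) \<le> k"
    then have "SG (F m) x \<le> SG (F k) x" using inc[of x] by (simp add: incseq_def)
    then show "SG (F m) x ^ Suc n \<le> SG (F k) x ^ Suc n" by (intro power_mono) auto
  qed
  have "(\<integral>\<^sup>+x. Sfull x ^ Suc n \<partial>M) = (\<integral>\<^sup>+x. (SUP k. SG (F k) x ^ Suc n) \<partial>M)"
    unfolding eq by (simp only: SUP_power_incseq[OF inc])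
  also have "\<dots> = (SUP k. \<integral>\<^sup>+x. SG (F k) x ^ Suc n \<partial>M)"
    using SG_meas F(1,2) by (intro nn_integral_monotone_convergence_SUP[OF inc2] borel_measurable_power_ennreal) auto
  also have "\<dots> \<le> of_nat (fact (Suc n)) * ennreal (2 * lam) ^ n * (ennreal 2 * (\<integral>\<^sup>+x. ennreal \<bar>f x\<bar> \<partial>M))"
    using SG_int F(1,2) by (intro SUP_least) auto
  finally show "(\<integral>\<^sup>+x. Sfull x ^ Suc n \<partial>M) \<le> of_nat (fact (Suc n)) * ennreal (2 * lam) ^ n * (ennreal 2 * (\<integral>\<^sup>+x. ennreal \<bar>f x\<bar> \<partial>M))" .
qed

end


lemma pow3:
  fixes a b c p :: real
  assumes "0 \<le> a" "0 \<le> b" "0 \<le> c" "0 \<le> p"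
  shows "(a + b + c) powr p \<le> 3 powr p * (a powr p + b powr p + c powr p)"
proof -
  define m where "m = max a (max b c)"
  have m0: "0 \<le> m" using assms unfolding m_def by simp
  have "a + b + c \<le> 3 * m" unfolding m_def by linarith
  then have "(a + b + c) powr p \<le> (3 * m) powr p" using assms by (intro powr_mono2) auto
  also have "\<dots> = 3 powr p * m powr p" using m0 by (simp add: powr_mult)
  also have "m powr p \<le> a powr p + b powr p + c powr p"
  proof -
    have "m = a \<or> m = b \<or> m = c" unfolding m_def by linarith
    moreover have "0 \<le> a powr p" "0 \<le> b powr p" "0 \<le> c powr p" by auto
    ultimately show ?thesis by auto
  qed
  finally show ?thesis by (simp add: mult_left_mono)
qed

lemma split_pow:
  fixes t lam p :: real
  assumes t: "0 \<le> t" and lam: "0 < lam" and np: "real n \<le> p" "p < real n + 1"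
  shows "t powr p \<le> lam powr (p - n) * t ^ n + lam powr (p - n - 1) * t ^ Suc n"
proof (cases "t = 0")
  case True then show ?thesis by simp
next
  case False
  then have tp: "0 < t" using t by simp
  show ?thesis
  proof (cases "t \<le> lam")
    case True
    have "t powr p = t powr (real n) * t powr (p - n)" by (simp add: powr_add[symmetric])
    also have "\<dots> = t ^ n * t powr (p - n)" using tp by (simp add: powr_realpow)
    also have "\<dots> \<le> t ^ n * lam powr (p - n)"
      using True np t by (intro mult_left_mono powr_mono2) auto
    finally have "t powr p \<le> lam powr (p - n) * t ^ n" by (simp add: mult.commute)
    moreover have "0 \<le> lam powr (p - n - 1) * t ^ Suc n" using t by simp
    ultimately show ?thesis by linarith
  next
    case False
    have "t powr p = t powr (real (Suc n)) * t powr (p - n - 1)" by (simp add: powr_add[symmetric])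
    also have "\<dots> = t ^ Suc n * t powr (p - n - 1)" using tp by (simp only: powr_realpow)
    also have "\<dots> \<le> t ^ Suc n * lam powr (p - n - 1)"
      using False np lam by (intro mult_left_mono powr_mono2') auto
    finally have "t powr p \<le> lam powr (p - n - 1) * t ^ Suc n" by (simp add: mult.commute)
    moreover have "0 \<le> lam powr (p - n) * t ^ n" using t by simp
    ultimately show ?thesis by linarith
  qed
qed

lemma f_pow:
  fixes y lam p :: real
  assumes "0 \<le> y" "y \<le> lam" "1 \<le> p"
  shows "y powr p \<le> lam powr (p - 1) * y"
proof (cases "y = 0")
  case True then show ?thesis by simp
next
  case False
  then have yp: "0 < y" using assms by simp
  have "y powr p = y powr ((p - 1) + 1)" by simp
  also have "\<dots> = y powr (p - 1) * y powr 1" by (rule powr_add)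
  also have "\<dots> = y powr (p - 1) * y" using yp by simp
  also have "\<dots> \<le> lam powr (p - 1) * y" using assms by (intro mult_right_mono powr_mono2) auto
  finally show ?thesis .
qed

lemma abs_infsum_ennreal:
  fixes h :: "'i \<Rightarrow> real"
  shows "ennreal \<bar>\<Sum>\<^sub>\<infinity>i\<in>I. h i\<bar> \<le> (\<Sum>\<^sub>\<infinity>i\<in>I. ennreal \<bar>h i\<bar>)"
proof (cases "h summable_on I")
  case True
  have sa: "(\<lambda>i. \<bar>h i\<bar>) summable_on I" using True summable_on_iff_abs_summable_on_real by auto
  have "\<bar>\<Sum>\<^sub>\<infinity>i\<in>I. h i\<bar> \<le> (\<Sum>\<^sub>\<infinity>i\<in>I. \<bar>h i\<bar>)"
    using norm_infsum_le[OF has_sum_infsum[OF True] has_sum_infsum[OF sa]] by simp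
  then have "ennreal \<bar>\<Sum>\<^sub>\<infinity>i\<in>I. h i\<bar> \<le> ennreal (\<Sum>\<^sub>\<infinity>i\<in>I. \<bar>h i\<bar>)" by (rule ennreal_leI)
  also have "\<dots> = (SUP F\<in>{F. finite F \<and> F \<subseteq> I}. ennreal (sum (\<lambda>i. \<bar>h i\<bar>) F))"
    by (rule infsum_nonneg_is_SUPREMUM_ennreal[OF sa]) simp
  also have "\<dots> = (SUP F\<in>{F. finite F \<and> F \<subseteq> I}. (\<Sum>i\<in>F. ennreal \<bar>h i\<bar>))"
    by (intro SUP_cong refl) (simp add: sum_ennreal)
  also have "\<dots> = (\<Sum>\<^sub>\<infinity>i\<in>I. ennreal \<bar>h i\<bar>)"
    by (rule nonneg_infsum_complete[symmetric]) simp
  finally show ?thesis .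
next
  case False
  then show ?thesis by (simp add: infsum_not_exists)
qed

definition Cp :: "real \<Rightarrow> real" where
  "Cp p = 3 powr p * (2 + fact (nat \<lfloor>p\<rfloor>) * 2 ^ nat \<lfloor>p\<rfloor> + fact (Suc (nat \<lfloor>p\<rfloor>)) * 2 ^ Suc (nat \<lfloor>p\<rfloor>))"

context czs begin

definition H1 :: "(nat \<Rightarrow> real) \<Rightarrow> real" where
  "H1 x = (\<Sum>\<^sub>\<infinity>Q \<in> MC. avg M f (par Q) * indicator Q x)"

definition H2 :: "(nat \<Rightarrow> real) \<Rightarrow> real" where
  "H2 x = (\<Sum>\<^sub>\<infinity>Q \<in> MC. (avg M f Q - avg M f (par Q)) * (measure M Q / measure M (par Q)) * indicator (par Q) x)"

lemma g_eq: "CZ_g d M f lam x = f x * indicator (space M - Omega d M f lam) x + H1 x + H2 x"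
  unfolding CZ_g_def H1_def H2_def ..

lemma H1_bound:
  assumes p: "0 < p"
  shows "ennreal (\<bar>H1 x\<bar> powr p) \<le> (\<Sum>\<^sub>\<infinity>Q\<in>MC. ennreal (lam powr p) * indicator Q x)"
proof -
  have disj: "\<And>Q Q'. Q \<in> MC \<Longrightarrow> Q' \<in> MC \<Longrightarrow> Q \<noteq> Q' \<Longrightarrow> Q \<inter> Q' = {}" using mc_disj by blast
  have eq: "(\<Sum>\<^sub>\<infinity>Q\<in>MC. ennreal (lam powr p) * indicator Q x) = ennreal (lam powr p) * indicator (\<Union>MC) x"
    by (rule infsum_disj_ind[OF disj])
  show ?thesis
  proof (cases "\<exists>Q0\<in>MC. x \<in> Q0")
    case True
    then obtain Q0 where Q0: "Q0 \<in> MC" "x \<in> Q0" by blast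
    have "H1 x = (\<Sum>\<^sub>\<infinity>Q\<in>{Q0}. avg M f (par Q) * indicator Q x)"
      unfolding H1_def
    proof (rule infsum_cong_neutral)
      fix Q assume "Q \<in> MC - {Q0}"
      then have "Q \<inter> Q0 = {}" using disj Q0(1) by blast
      then show "avg M f (par Q) * indicator Q x = 0" using Q0(2) by (auto simp: indicator_def)
    qed (use Q0 in auto)
    also have "\<dots> = avg M f (par Q0)" using Q0 by simp
    finally have "\<bar>H1 x\<bar> \<le> lam" using mc_par_abs_avg[OF Q0(1)] by simp
    then have "\<bar>H1 x\<bar> powr p \<le> lam powr p" using p by (intro powr_mono2) auto
    then show ?thesis unfolding eq using Q0 by (auto simp: indicator_def intro: ennreal_leI)
  next
    case False
    then have "H1 x = 0" unfolding H1_def by (intro infsum_0) (auto simp: indicator_def)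
    then show ?thesis by simp
  qed
qed

lemma H2_bound: "ennreal \<bar>H2 x\<bar> \<le> Sfull x"
proof -
  have "ennreal \<bar>H2 x\<bar> \<le> (\<Sum>\<^sub>\<infinity>Q\<in>MC. ennreal \<bar>(avg M f Q - avg M f (par Q)) * (measure M Q / measure M (par Q)) * indicator (par Q) x\<bar>)"
    unfolding H2_def by (rule abs_infsum_ennreal)
  also have "\<dots> = Sfull x"
    unfolding Sfull_def aQ_def tQ_def by (intro infsum_cong) (simp add: indicator_def)
  finally show ?thesis .
qed

end


lemma e2k: "ennreal ((2::real) ^ k) = (2::ennreal) ^ k"
  by (induction k) (simp_all add: ennreal_mult)

lemma top_pow: "(top :: ennreal) ^ Suc k = top"
  by (induction k) (auto simp: ennreal_top_mult)

context czs begin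

lemma part_a:
  assumes p: "1 \<le> p"
  shows "(\<integral>\<^sup>+ x. ennreal (\<bar>CZ_g d M f lam x\<bar> powr p) \<partial>M)
           \<le> ennreal (Cp p * lam powr (p - 1)) * (\<integral>\<^sup>+ x. ennreal \<bar>f x\<bar> \<partial>M)"
proof -
  define n where "n = nat \<lfloor>p\<rfloor>"
  have np: "real n \<le> p" "p < real n + 1" unfolding n_def using p by linarith+
  have n1: "1 \<le> n" unfolding n_def using p by linarith
  obtain k where k: "n = Suc k" using n1 by (cases n) auto
  define I where "I = (\<integral>\<^sup>+x. ennreal \<bar>f x\<bar> \<partial>M)"
  define l where "l = lam powr (p - 1)"
  have l0: "0 \<le> l" unfolding l_def by simp
  define u1 where "u1 x = ennreal l * ennreal \<bar>f x\<bar>" for x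
  define u2 where "u2 x = (\<Sum>\<^sub>\<infinity>Q\<in>MC. ennreal (lam powr p) * indicator Q x)" for x
  define u3 where "u3 x = ennreal (lam powr (p - n)) * Sfull x ^ n + ennreal (lam powr (p - n - 1)) * Sfull x ^ Suc n" for x
  have pw: "AE x in M. ennreal (\<bar>CZ_g d M f lam x\<bar> powr p) \<le> ennreal (3 powr p) * (u1 x + u2 x + u3 x)"
    using diff_AE
  proof eventually_elim
    fix x assume hx: "x \<in> space M - Omega d M f lam \<longrightarrow> \<bar>f x\<bar> \<le> lam"
    define a where "a = \<bar>f x * indicator (space M - Omega d M f lam) x\<bar>"
    define b where "b = \<bar>H1 x\<bar>"
    define c where "c = \<bar>H2 x\<bar>"
    have abc: "0 \<le> a" "0 \<le> b" "0 \<le> c" unfolding a_def b_def c_def by auto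
    have "\<bar>CZ_g d M f lam x\<bar> \<le> a + b + c" unfolding g_eq a_def b_def c_def by linarith
    then have "\<bar>CZ_g d M f lam x\<bar> powr p \<le> (a + b + c) powr p" using p by (intro powr_mono2) auto
    also have "\<dots> \<le> 3 powr p * (a powr p + b powr p + c powr p)" using abc p by (intro pow3) auto
    finally have "ennreal (\<bar>CZ_g d M f lam x\<bar> powr p) \<le> ennreal (3 powr p * (a powr p + b powr p + c powr p))"
      by (rule ennreal_leI)
    also have "\<dots> = ennreal (3 powr p) * (ennreal (a powr p) + ennreal (b powr p) + ennreal (c powr p))"
      by (simp add: ennreal_mult ennreal_plus)
    also have "\<dots> \<le> ennreal (3 powr p) * (u1 x + u2 x + u3 x)"
    proof (intro mult_left_mono add_mono)
      show "ennreal (a powr p) \<le> u1 x"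
      proof (cases "x \<in> space M - Omega d M f lam")
        case True
        then have "a = \<bar>f x\<bar>" "\<bar>f x\<bar> \<le> lam" using hx unfolding a_def by auto
        then have "a powr p \<le> l * \<bar>f x\<bar>" unfolding l_def using f_pow[of "\<bar>f x\<bar>" lam p] p by simp
        then have "ennreal (a powr p) \<le> ennreal (l * \<bar>f x\<bar>)" by (rule ennreal_leI)
        then show ?thesis unfolding u1_def using l0 by (simp add: ennreal_mult)
      next
        case False then show ?thesis unfolding a_def by simp
      qed
      show "ennreal (b powr p) \<le> u2 x" unfolding b_def u2_def using H1_bound p by simp
      show "ennreal (c powr p) \<le> u3 x"
      proof (cases "Sfull x = top")
        case True
        have "ennreal (lam powr (p - n)) * Sfull x ^ n = top"
          unfolding True k top_pow using lam by (simp add: ennreal_mult_top)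
        then show ?thesis unfolding u3_def by simp
      next
        case False
        define s where "s = enn2real (Sfull x)"
        have s0: "0 \<le> s" unfolding s_def by simp
        have Ss: "Sfull x = ennreal s" unfolding s_def using False by (simp add: ennreal_enn2real_if)
        have "ennreal c \<le> ennreal s" using H2_bound[of x] Ss unfolding c_def by simp
        then have cs: "c \<le> s" using s0 by (simp add: ennreal_le_iff)
        have "c powr p \<le> s powr p" using cs abc p by (intro powr_mono2) auto
        also have "\<dots> \<le> lam powr (p - n) * s ^ n + lam powr (p - n - 1) * s ^ Suc n"
          by (rule split_pow[OF s0 lam np])
        finally have "ennreal (c powr p) \<le> ennreal (lam powr (p - n) * s ^ n + lam powr (p - n - 1) * s ^ Suc n)"
          by (rule ennreal_leI)
        also have "\<dots> = u3 x" unfolding u3_def Ss using s0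
          by (simp add: ennreal_plus ennreal_mult ennreal_power)
        finally show ?thesis .
      qed
    qed simp
    finally show "ennreal (\<bar>CZ_g d M f lam x\<bar> powr p) \<le> ennreal (3 powr p) * (u1 x + u2 x + u3 x)" .
  qed
  have m1: "u1 \<in> borel_measurable M" unfolding u1_def[abs_def] using fmeas by measurable
  have m2: "u2 \<in> borel_measurable M" unfolding u2_def[abs_def]
    using MC_countable mc_sets by (intro measurable_infsum) auto
  have mS: "Sfull \<in> borel_measurable M" by (rule Sfull_props(1))
  have m3: "u3 \<in> borel_measurable M" unfolding u3_def[abs_def] using mS by measurable
  have "(\<integral>\<^sup>+ x. ennreal (\<bar>CZ_g d M f lam x\<bar> powr p) \<partial>M) \<le> (\<integral>\<^sup>+ x. ennreal (3 powr p) * (u1 x + u2 x + u3 x) \<partial>M)"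
    by (rule nn_integral_mono_AE[OF pw])
  also have "\<dots> = ennreal (3 powr p) * ((\<integral>\<^sup>+x. u1 x \<partial>M) + (\<integral>\<^sup>+x. u2 x \<partial>M) + (\<integral>\<^sup>+x. u3 x \<partial>M))"
    using m1 m2 m3 by (simp add: nn_integral_cmult nn_integral_add)
  also have "(\<integral>\<^sup>+x. u1 x \<partial>M) = ennreal l * I" unfolding u1_def I_def using fmeas
    by (intro nn_integral_cmult) measurable
  also have "(\<integral>\<^sup>+x. u2 x \<partial>M) \<le> ennreal l * I"
  proof -
    have "(\<integral>\<^sup>+x. u2 x \<partial>M) = (\<Sum>\<^sub>\<infinity>Q\<in>MC. \<integral>\<^sup>+x. ennreal (lam powr p) * indicator Q x \<partial>M)"
      unfolding u2_def using MC_countable mc_sets by (intro nn_integral_infsum) auto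
    also have "\<dots> = (\<Sum>\<^sub>\<infinity>Q\<in>MC. ennreal (lam powr p) * emeasure M Q)"
      using mc_sets by (intro infsum_cong nn_integral_cmult_indicator) auto
    also have "\<dots> \<le> ennreal l * I" unfolding I_def
    proof (rule infsum_bound'[OF _ l0])
      fix Q assume Q: "Q \<in> MC"
      have "lam powr p = lam powr ((p - 1) + 1)" by simp
      also have "\<dots> = lam powr (p - 1) * lam powr 1" by (rule powr_add)
      finally have "lam powr p = l * lam" unfolding l_def using lam by simp
      then have "lam powr p * measure M Q = l * (lam * measure M Q)" by simp
      also have "\<dots> \<le> l * J Q" using mc_big[OF Q] l0 by (intro mult_left_mono) auto
      finally have le: "lam powr p * measure M Q \<le> l * J Q" .
      have "ennreal (lam powr p) * emeasure M Q = ennreal (lam powr p * measure M Q)"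
        using dy_emeasure[OF mc_dy[OF Q]] by (simp add: ennreal_mult)
      also have "\<dots> \<le> ennreal (l * J Q)" using le by (rule ennreal_leI)
      finally show "ennreal (lam powr p) * emeasure M Q \<le> ennreal (l * J Q)" .
    qed
    finally show ?thesis .
  qed
  also have "(\<integral>\<^sup>+x. u3 x \<partial>M) \<le> ennreal (l * (fact n * 2 ^ n + fact (Suc n) * 2 ^ Suc n)) * I"
  proof -
    have "(\<integral>\<^sup>+x. u3 x \<partial>M) = ennreal (lam powr (p - n)) * (\<integral>\<^sup>+x. Sfull x ^ n \<partial>M)
        + ennreal (lam powr (p - n - 1)) * (\<integral>\<^sup>+x. Sfull x ^ Suc n \<partial>M)"
      unfolding u3_def using mS by (simp add: nn_integral_cmult nn_integral_add)
    also have "\<dots> \<le> ennreal (lam powr (p - n)) * (of_nat (fact (Suc k)) * ennreal (2 * lam) ^ k * (ennreal 2 * I))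
        + ennreal (lam powr (p - n - 1)) * (of_nat (fact (Suc (Suc k))) * ennreal (2 * lam) ^ Suc k * (ennreal 2 * I))"
      unfolding I_def k using Sfull_props(2)[of k] Sfull_props(2)[of "Suc k"]
      by (intro add_mono mult_left_mono) auto
    also have "\<dots> = ennreal (lam powr (p - n) * real (fact (Suc k)) * (2 * lam) ^ k * 2) * I
        + ennreal (lam powr (p - n - 1) * real (fact (Suc (Suc k))) * (2 * lam) ^ Suc k * 2) * I"
      using lam by (simp add: ennreal_mult ennreal_power ennreal_of_nat_eq_real_of_nat e2k mult_ac)
    also have "lam powr (p - n) * real (fact (Suc k)) * (2 * lam) ^ k * 2 = l * (fact n * 2 ^ n)"
    proof -
      have h: "lam powr (p - n) * lam ^ k = l"
        unfolding l_def k using lam by (simp add: powr_realpow[symmetric] powr_add[symmetric])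
      have "lam powr (p - n) * real (fact (Suc k)) * (2 * lam) ^ k * 2 = (lam powr (p - n) * lam ^ k) * (real (fact (Suc k)) * 2 ^ Suc k)"
        by (simp only: power_mult_distrib power_Suc mult_ac)
      also have "\<dots> = l * (fact n * 2 ^ n)" by (simp only: h) (simp add: k algebra_simps)
      finally show ?thesis .
    qed
    also have "lam powr (p - n - 1) * real (fact (Suc (Suc k))) * (2 * lam) ^ Suc k * 2 = l * (fact (Suc n) * 2 ^ Suc n)"
    proof -
      have h: "lam powr (p - n - 1) * lam ^ Suc k = l"
      proof -
        have "lam ^ Suc k = lam powr real (Suc k)" using lam by (simp only: powr_realpow)
        then have "lam powr (p - n - 1) * lam ^ Suc k = lam powr ((p - n - 1) + real (Suc k))"
          by (simp only: powr_add)
        also have "(p - n - 1) + real (Suc k) = p - 1" using k by simp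
        finally show ?thesis unfolding l_def .
      qed
      have "lam powr (p - n - 1) * real (fact (Suc (Suc k))) * (2 * lam) ^ Suc k * 2 = (lam powr (p - n - 1) * lam ^ Suc k) * (real (fact (Suc (Suc k))) * 2 ^ Suc (Suc k))"
        by (simp only: power_mult_distrib power_Suc mult_ac)
      also have "\<dots> = l * (fact (Suc n) * 2 ^ Suc n)" by (simp only: h) (simp add: k algebra_simps)
      finally show ?thesis .
    qed
    also have "ennreal (l * (fact n * 2 ^ n)) * I + ennreal (l * (fact (Suc n) * 2 ^ Suc n)) * I
        = ennreal (l * (fact n * 2 ^ n + fact (Suc n) * 2 ^ Suc n)) * I"
      using l0 by (simp add: distrib_left distrib_right[symmetric] ennreal_plus)
    finally show ?thesis .
  qed
  finally have "(\<integral>\<^sup>+ x. ennreal (\<bar>CZ_g d M f lam x\<bar> powr p) \<partial>M)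
      \<le> ennreal (3 powr p) * (ennreal l * I + ennreal l * I + ennreal (l * (fact n * 2 ^ n + fact (Suc n) * 2 ^ Suc n)) * I)"
    by (simp add: mult_left_mono add_mono)
  also have "\<dots> = ennreal (3 powr p * (l + l + l * (fact n * 2 ^ n + fact (Suc n) * 2 ^ Suc n))) * I"
  proof -
    define K :: real where "K = fact n * 2 ^ n + fact (Suc n) * 2 ^ Suc n"
    have K0: "0 \<le> K" unfolding K_def by simp
    have lK: "0 \<le> l * K" using l0 K0 by simp
    have e0: "ennreal (l + l) = ennreal l + ennreal l" by (rule ennreal_plus) (use l0 in auto)
    have e1': "ennreal ((l + l) + l * K) = ennreal (l + l) + ennreal (l * K)" by (rule ennreal_plus) (use l0 lK in auto)
    have e1: "ennreal (l + l + l * K) = ennreal l + ennreal l + ennreal (l * K)"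
      using e0 e1' by simp
    have e2: "ennreal (3 powr p * (l + l + l * K)) = ennreal (3 powr p) * ennreal (l + l + l * K)"
      using l0 lK by (intro ennreal_mult) auto
    have "ennreal (3 powr p) * (ennreal l * I + ennreal l * I + ennreal (l * K) * I)
        = ennreal (3 powr p) * ((ennreal l + ennreal l + ennreal (l * K)) * I)"
      by (simp only: distrib_right)
    also have "\<dots> = ennreal (3 powr p * (l + l + l * K)) * I"
      by (simp only: e1[symmetric] e2 mult.assoc)
    finally show ?thesis unfolding K_def .
  qed
  also have "3 powr p * (l + l + l * (fact n * 2 ^ n + fact (Suc n) * 2 ^ Suc n)) = Cp p * lam powr (p - 1)"
    unfolding Cp_def l_def n_def by (simp add: algebra_simps)
  finally show ?thesis unfolding I_def .
qed

end

lemma partA_all: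
  "(\<forall>p::real. 1 \<le> p \<longrightarrow>
      (\<exists>C::real. \<forall>(d::nat) M (f :: (nat \<Rightarrow> real) \<Rightarrow> real) (lam::real).
         dyadic_setting d M \<and> integrable M f \<and> 0 < lam \<longrightarrow>
         (\<integral>\<^sup>+ x. ennreal (\<bar>CZ_g d M f lam x\<bar> powr p) \<partial>M)
           \<le> ennreal (C * lam powr (p - 1)) * (\<integral>\<^sup>+ x. ennreal \<bar>f x\<bar> \<partial>M)))"
proof (intro allI impI)
  fix p :: real assume p: "1 \<le> p"
  show "\<exists>C::real. \<forall>(d::nat) M (f :: (nat \<Rightarrow> real) \<Rightarrow> real) (lam::real).
         dyadic_setting d M \<and> integrable M f \<and> 0 < lam \<longrightarrow>
         (\<integral>\<^sup>+ x. ennreal (\<bar>CZ_g d M f lam x\<bar> powr p) \<partial>M)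
           \<le> ennreal (C * lam powr (p - 1)) * (\<integral>\<^sup>+ x. ennreal \<bar>f x\<bar> \<partial>M)"
  proof (intro exI[of _ "Cp p"] allI impI)
    fix d :: nat and M :: "(nat \<Rightarrow> real) measure" and f :: "(nat \<Rightarrow> real) \<Rightarrow> real" and lam :: real
    assume h: "dyadic_setting d M \<and> integrable M f \<and> (0::real) < lam"
    interpret czs d M f lam using h by unfold_locales auto
    show "(\<integral>\<^sup>+ x. ennreal (\<bar>CZ_g d M f lam x\<bar> powr p) \<partial>M)
           \<le> ennreal (Cp p * lam powr (p - 1)) * (\<integral>\<^sup>+ x. ennreal \<bar>f x\<bar> \<partial>M)"
      by (rule part_a[OF p])
  qed
qed

lemma partBC_all:
  "(\<forall>(d::nat) M (f :: (nat \<Rightarrow> real) \<Rightarrow> real) (lam::real).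
      dyadic_setting d M \<and> integrable M f \<and> 0 < lam \<longrightarrow>
      (\<forall>Q \<in> maxcubes d M f lam.
          {x \<in> space M. CZ_b M f Q x \<noteq> 0} \<subseteq> Q
        \<and> integrable M (CZ_b M f Q) \<and> (\<integral>x. CZ_b M f Q x \<partial>M) = 0)
    \<and> (\<Sum>\<^sub>\<infinity>Q \<in> maxcubes d M f lam. \<integral>\<^sup>+ x. ennreal \<bar>CZ_b M f Q x\<bar> \<partial>M)
          \<le> 2 * (\<integral>\<^sup>+ x. ennreal \<bar>f x\<bar> \<partial>M)
    \<and> (\<forall>Q \<in> maxcubes d M f lam.
          {x \<in> space M. CZ_beta d M f Q x \<noteq> 0} \<subseteq> dparent d Q
        \<and> integrable M (CZ_beta d M f Q) \<and> (\<integral>x. CZ_beta d M f Q x \<partial>M) = 0)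
    \<and> (\<Sum>\<^sub>\<infinity>Q \<in> maxcubes d M f lam. \<integral>\<^sup>+ x. ennreal \<bar>CZ_beta d M f Q x\<bar> \<partial>M)
          \<le> 4 * (\<integral>\<^sup>+ x. ennreal \<bar>f x\<bar> \<partial>M))"
  apply (intro allI impI)
  subgoal for d M f lam
    by (rule czs.part_bc) (simp add: czs_def)
  done

theorem theorem2p1:
  shows
  "(\<forall>p::real. 1 \<le> p \<longrightarrow>
      (\<exists>C::real. \<forall>(d::nat) M (f :: (nat \<Rightarrow> real) \<Rightarrow> real) (lam::real).
         dyadic_setting d M \<and> integrable M f \<and> 0 < lam \<longrightarrow>
         (\<integral>\<^sup>+ x. ennreal (\<bar>CZ_g d M f lam x\<bar> powr p) \<partial>M)
           \<le> ennreal (C * lam powr (p - 1)) * (\<integral>\<^sup>+ x. ennreal \<bar>f x\<bar> \<partial>M)))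
   \<and>
   (\<forall>(d::nat) M (f :: (nat \<Rightarrow> real) \<Rightarrow> real) (lam::real).
      dyadic_setting d M \<and> integrable M f \<and> 0 < lam \<longrightarrow>
      (\<forall>Q \<in> maxcubes d M f lam.
          {x \<in> space M. CZ_b M f Q x \<noteq> 0} \<subseteq> Q
        \<and> integrable M (CZ_b M f Q) \<and> (\<integral>x. CZ_b M f Q x \<partial>M) = 0)
    \<and> (\<Sum>\<^sub>\<infinity>Q \<in> maxcubes d M f lam. \<integral>\<^sup>+ x. ennreal \<bar>CZ_b M f Q x\<bar> \<partial>M)
          \<le> 2 * (\<integral>\<^sup>+ x. ennreal \<bar>f x\<bar> \<partial>M)
    \<and> (\<forall>Q \<in> maxcubes d M f lam.
          {x \<in> space M. CZ_beta d M f Q x \<noteq> 0} \<subseteq> dparent d Q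
        \<and> integrable M (CZ_beta d M f Q) \<and> (\<integral>x. CZ_beta d M f Q x \<partial>M) = 0)
    \<and> (\<Sum>\<^sub>\<infinity>Q \<in> maxcubes d M f lam. \<integral>\<^sup>+ x. ennreal \<bar>CZ_beta d M f Q x\<bar> \<partial>M)
          \<le> 4 * (\<integral>\<^sup>+ x. ennreal \<bar>f x\<bar> \<partial>M))"
  by (rule conjI[OF partA_all partBC_all])


end
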